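(* Let $H^{\alpha\beta}$ be a smooth symmetric 2-tensor on $\mathbb{R}^{1+3}$ and $\widetilde\Box_g=\Box+H^{\alpha\beta}\partial_\alpha\partial_\beta$. For every multi-index $I$ there is a constant such that for every smooth function $\phi$, $$|\widetilde\Box_gZ^I\phi-\hat Z^I\widetilde\Box_g\phi|\lesssim\frac1{1+t+|q|}\sum_{|K|\le|I|}\ \sum_{|J|+(|K|-1)_+\le|I|}|Z^JH|\,|\partial Z^K\phi|$$ $$+\frac1{1+|q|}\sum_{|K|\le|I|}\Big(\sum_{|J|+(|K|-1)_+\le|I|}|Z^JH|_{LL}+\sum_{|J'|+(|K|-1)_+\le|I|-1}|Z^{J'}H|_{L\mathcal T}+\sum_{|J''|+(|K|-1)_+\le|I|-2}|Z^{J''}H|\Big)|\partial Z^K\phi|,$$ where $(|K|-1)_+=|K|-1$ if $|K|\ge1$ and $0$ if $|K|=0$.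
   Context: Coordinates $(t,x)$, $r=|x|$, $q=r-t$; $\Box=m^{\alpha\beta}\partial_\alpha\partial_\beta=-\partial_t^2+\Delta$; indices raised/lowered with the Minkowski metric $m$. $\mathcal Z=\{\partial_\alpha,\ \Omega_{\alpha\beta}=x_\alpha\partial_\beta-x_\beta\partial_\alpha,\ S=t\partial_t+r\partial_r\}$; $Z^I$ is a product of $|I|$ fields from $\mathcal Z$ (indexed by the multi-index $I$). For $Z\in\mathcal Z$, $[Z,\Box]=-c_Z\Box$ with $c_S=2$ and $c_Z=0$ otherwise; $\hat Z=Z+c_Z$ and $\hat Z^I$ is the corresponding product. Null frame $L=\partial_t+\partial_r$, $\underline L=\partial_t-\partial_r$, $S_1,S_2$ orthonormal tangent to spheres; $\mathcal T=\{L,S_1,S_2\}$. For a 2-tensor $p$: $|p|_{LL}=|p_{\alpha\beta}L^\alpha L^\beta|$, $|p|_{L\mathcal T}=\sum_{T\in\mathcal T}|p_{\alpha\beta}L^\alpha T^\beta|$ (lower indices via $m$), $|p|$ the sum of absolute values of components; $|\partial f|=\sum_\alpha|\partial_\alpha f|$. $A\lesssim B$ means $A\le CB$ with $C$ independent of $\phi$, $H$ and the point. *)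

theory Defs
  imports "HOL-Analysis.Analysis"
begin

text \<open>Spacetime R^{1+3} is real^4; index 0 is time t, indices 1,2,3 are space x.\<close>

type_synonym pt = "real ^ 4"

definition tcoord :: "pt \<Rightarrow> real" where "tcoord p = p $ 0"

definition rad :: "pt \<Rightarrow> real" where
  "rad p = sqrt (\<Sum>i\<in>UNIV - {0::4}. (p $ i)\<^sup>2)"

definition qcoord :: "pt \<Rightarrow> real" where "qcoord p = rad p - tcoord p"

definition mdiag :: "4 \<Rightarrow> real" where "mdiag a = (if a = 0 then -1 else 1)"

definition pd :: "4 \<Rightarrow> (pt \<Rightarrow> real) \<Rightarrow> pt \<Rightarrow> real" where
  "pd a f p = deriv (\<lambda>s. f (p + s *\<^sub>R axis a 1)) 0"

definition smooth :: "(pt \<Rightarrow> real) \<Rightarrow> bool" where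
  "smooth f \<longleftrightarrow> (\<forall>ds::4 list. \<forall>p. foldr pd ds f differentiable (at p))"

text \<open>The vector fields: partial_a, Omega_ab = x_a partial_b - x_b partial_a (a<b), scaling S.\<close>
datatype zf = Dz 4 | Om 4 4 | Sc

definition Zset :: "zf set" where
  "Zset = range Dz \<union> {Om a b | a b. a < b} \<union> {Sc}"

definition xlow :: "4 \<Rightarrow> pt \<Rightarrow> real" where "xlow a p = mdiag a * p $ a"

fun apZ :: "zf \<Rightarrow> (pt \<Rightarrow> real) \<Rightarrow> pt \<Rightarrow> real" where
  "apZ (Dz a) f p = pd a f p"
| "apZ (Om a b) f p = xlow a p * pd b f p - xlow b p * pd a f p"
| "apZ Sc f p = (\<Sum>a\<in>UNIV. p $ a * pd a f p)"

definition cZ :: "zf \<Rightarrow> real" where "cZ Z = (if Z = Sc then 2 else 0)"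

definition hatZ :: "zf \<Rightarrow> (pt \<Rightarrow> real) \<Rightarrow> pt \<Rightarrow> real" where
  "hatZ Z f p = apZ Z f p + cZ Z * f p"

text \<open>Z^I and hat Z^I for a multi-index I (a list of fields, applied right to left).\<close>
definition ZI :: "zf list \<Rightarrow> (pt \<Rightarrow> real) \<Rightarrow> pt \<Rightarrow> real" where
  "ZI I f = foldr apZ I f"

definition hatZI :: "zf list \<Rightarrow> (pt \<Rightarrow> real) \<Rightarrow> pt \<Rightarrow> real" where
  "hatZI I f = foldr hatZ I f"

definition MI :: "nat \<Rightarrow> zf list set" where
  "MI n = {J. set J \<subseteq> Zset \<and> length J \<le> n}"

definition box :: "(pt \<Rightarrow> real) \<Rightarrow> pt \<Rightarrow> real" where
  "box f p = (\<Sum>a\<in>UNIV. mdiag a * pd a (pd a f) p)"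

definition boxt :: "(4 \<Rightarrow> 4 \<Rightarrow> pt \<Rightarrow> real) \<Rightarrow> (pt \<Rightarrow> real) \<Rightarrow> pt \<Rightarrow> real" where
  "boxt H f p = box f p + (\<Sum>a\<in>UNIV. \<Sum>b\<in>UNIV. H a b p * pd a (pd b f) p)"

definition ZH :: "zf list \<Rightarrow> (4 \<Rightarrow> 4 \<Rightarrow> pt \<Rightarrow> real) \<Rightarrow> 4 \<Rightarrow> 4 \<Rightarrow> pt \<Rightarrow> real" where
  "ZH J H a b = ZI J (H a b)"

definition tnorm :: "(4 \<Rightarrow> 4 \<Rightarrow> pt \<Rightarrow> real) \<Rightarrow> pt \<Rightarrow> real" where
  "tnorm P p = (\<Sum>a\<in>UNIV. \<Sum>b\<in>UNIV. \<bar>P a b p\<bar>)"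

definition gradnorm :: "(pt \<Rightarrow> real) \<Rightarrow> pt \<Rightarrow> real" where
  "gradnorm f p = (\<Sum>a\<in>UNIV. \<bar>pd a f p\<bar>)"

text \<open>Null frame. omega = x/r (convention e_1 at r = 0), L = partial_t + partial_r.\<close>
definition omega :: "pt \<Rightarrow> 4 \<Rightarrow> real" where
  "omega p i = (if rad p = 0 then (if i = 1 then 1 else 0) else p $ i / rad p)"

definition Lvec :: "pt \<Rightarrow> pt" where
  "Lvec p = (\<chi> i. if i = 0 then 1 else omega p i)"

definition sframe :: "(pt \<Rightarrow> pt) \<Rightarrow> (pt \<Rightarrow> pt) \<Rightarrow> bool" where
  "sframe S1 S2 \<longleftrightarrow> (\<forall>p. S1 p $ 0 = 0 \<and> S2 p $ 0 = 0 \<and> norm (S1 p) = 1 \<and> norm (S2 p) = 1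
      \<and> inner (S1 p) (S2 p) = 0 \<and> inner (S1 p) (Lvec p) = 0 \<and> inner (S2 p) (Lvec p) = 0)"

definition contr :: "(4 \<Rightarrow> 4 \<Rightarrow> pt \<Rightarrow> real) \<Rightarrow> pt \<Rightarrow> pt \<Rightarrow> pt \<Rightarrow> real" where
  "contr P p X Y = (\<Sum>a\<in>UNIV. \<Sum>b\<in>UNIV. mdiag a * mdiag b * P a b p * X $ a * Y $ b)"

definition normLL :: "(4 \<Rightarrow> 4 \<Rightarrow> pt \<Rightarrow> real) \<Rightarrow> pt \<Rightarrow> real" where
  "normLL P p = \<bar>contr P p (Lvec p) (Lvec p)\<bar>"

definition normLT :: "(pt \<Rightarrow> pt) \<Rightarrow> (pt \<Rightarrow> pt) \<Rightarrow> (4 \<Rightarrow> 4 \<Rightarrow> pt \<Rightarrow> real) \<Rightarrow> pt \<Rightarrow> real" where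
  "normLT S1 S2 P p = \<bar>contr P p (Lvec p) (Lvec p)\<bar> + \<bar>contr P p (Lvec p) (S1 p)\<bar>
      + \<bar>contr P p (Lvec p) (S2 p)\<bar>"

end

theory Submission
  imports Defs
begin


lemma pd_has:
  assumes "(f has_derivative F) (at p)"
  shows "pd a f p = F (axis a 1)"
proof -
  have lin: "linear F" using assms has_derivative_linear by blast
  have "((\<lambda>s. p + s *\<^sub>R axis a 1) has_derivative (\<lambda>s. s *\<^sub>R axis a (1::real))) (at (0::real))"
    by (auto intro!: derivative_eq_intros)
  moreover have "(f has_derivative F) (at (p + 0 *\<^sub>R axis a 1))" using assms by simp
  ultimately have "((\<lambda>s. f (p + s *\<^sub>R axis a 1)) has_derivative (\<lambda>s. F (s *\<^sub>R axis a 1))) (at 0)"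
    by (rule has_derivative_compose)
  moreover have "(\<lambda>s. F (s *\<^sub>R axis a 1)) = (*) (F (axis a 1))"
    using lin by (auto simp: linear_scale)
  ultimately have "((\<lambda>s. f (p + s *\<^sub>R axis a 1)) has_field_derivative F (axis a 1)) (at 0)"
    by (simp add: has_field_derivative_def)
  then show ?thesis unfolding pd_def by (rule DERIV_imp_deriv)
qed

lemma pd_dir:
  assumes "f differentiable (at p)"
  shows "((\<lambda>s. f (p + s *\<^sub>R axis a 1)) has_real_derivative pd a f p) (at 0)"
proof -
  obtain F where F: "(f has_derivative F) (at p)" using assms differentiable_def by blast
  have lin: "linear F" using F has_derivative_linear by blast
  have "((\<lambda>s. p + s *\<^sub>R axis a 1) has_derivative (\<lambda>s. s *\<^sub>R axis a (1::real))) (at (0::real))"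
    by (auto intro!: derivative_eq_intros)
  moreover have "(f has_derivative F) (at (p + 0 *\<^sub>R axis a 1))" using F by simp
  ultimately have "((\<lambda>s. f (p + s *\<^sub>R axis a 1)) has_derivative (\<lambda>s. F (s *\<^sub>R axis a 1))) (at 0)"
    by (rule has_derivative_compose)
  moreover have "(\<lambda>s. F (s *\<^sub>R axis a 1)) = (*) (F (axis a 1))"
    using lin by (auto simp: linear_scale)
  ultimately show ?thesis using pd_has[OF F]
    by (simp add: has_field_derivative_def)
qed

definition dif :: "(pt \<Rightarrow> real) \<Rightarrow> bool" where
  "dif f \<longleftrightarrow> (\<forall>p. f differentiable (at p))"

lemma pd_add:
  assumes "f differentiable (at p)" "g differentiable (at p)"
  shows "pd a (\<lambda>q. f q + g q) p = pd a f p + pd a g p"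
proof -
  obtain F G where F: "(f has_derivative F) (at p)" and G: "(g has_derivative G) (at p)"
    using assms differentiable_def by blast
  have "((\<lambda>q. f q + g q) has_derivative (\<lambda>v. F v + G v)) (at p)"
    using F G by (rule has_derivative_add)
  from pd_has[OF this, of a] show ?thesis using pd_has[OF F, of a] pd_has[OF G, of a] by simp
qed

lemma pd_mult:
  assumes "f differentiable (at p)" "g differentiable (at p)"
  shows "pd a (\<lambda>q. f q * g q) p = pd a f p * g p + f p * pd a g p"
proof -
  obtain F G where F: "(f has_derivative F) (at p)" and G: "(g has_derivative G) (at p)"
    using assms differentiable_def by blast
  have "((\<lambda>q. f q * g q) has_derivative (\<lambda>v. f p * G v + F v * g p)) (at p)"
    using F G by (rule has_derivative_mult)
  from pd_has[OF this, of a] show ?thesis using pd_has[OF F, of a] pd_has[OF G, of a] by simp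
qed

lemma pd_const: "pd a (\<lambda>q. c) p = 0"
proof -
  have "((\<lambda>q::pt. c) has_derivative (\<lambda>v. 0)) (at p)" by (rule has_derivative_const)
  from pd_has[OF this, of a] show ?thesis by simp
qed

lemma pd_coord: "pd a (\<lambda>q. q $ b) p = (if a = b then 1 else 0)"
proof -
  have "((\<lambda>q::pt. q $ b) has_derivative (\<lambda>v. v $ b)) (at p)"
    by (rule bounded_linear_imp_has_derivative) (rule bounded_linear_vec_nth)
  from pd_has[OF this, of a] show ?thesis by (simp add: axis_def)
qed

lemma pd_cmult:
  assumes "f differentiable (at p)"
  shows "pd a (\<lambda>q. c * f q) p = c * pd a f p"
  using pd_mult[of "\<lambda>q. c" p f a] assms by (simp add: pd_const)

lemma pd_minus:
  assumes "f differentiable (at p)" "g differentiable (at p)"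
  shows "pd a (\<lambda>q. f q - g q) p = pd a f p - pd a g p"
proof -
  have "pd a (\<lambda>q. f q + (-1) * g q) p = pd a f p + pd a (\<lambda>q. (-1) * g q) p"
    using assms by (intro pd_add) auto
  then show ?thesis using pd_cmult[OF assms(2), of a "-1"] by simp
qed

lemma pd_sum:
  assumes "finite A" "\<And>i. i \<in> A \<Longrightarrow> f i differentiable (at p)"
  shows "pd a (\<lambda>q. \<Sum>i\<in>A. f i q) p = (\<Sum>i\<in>A. pd a (f i) p)"
  using assms
proof (induction A rule: finite_induct)
  case empty then show ?case by (simp add: pd_const)
next
  case (insert x F)
  have d: "(\<lambda>q. \<Sum>i\<in>F. f i q) differentiable (at p)"
    using insert by (auto intro!: differentiable_sum)
  have "pd a (\<lambda>q. \<Sum>i\<in>insert x F. f i q) p = pd a (\<lambda>q. f x q + (\<Sum>i\<in>F. f i q)) p"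
    using insert by simp
  also have "\<dots> = pd a (f x) p + pd a (\<lambda>q. \<Sum>i\<in>F. f i q) p"
    using insert d by (intro pd_add) auto
  finally show ?case using insert by simp
qed


lemma dif_const[simp]: "dif (\<lambda>q. c)" unfolding dif_def by simp
lemma dif_coord[simp]: "dif (\<lambda>q. q $ b)" unfolding dif_def
  by (simp add: bounded_linear_imp_differentiable bounded_linear_vec_nth)
lemma dif_add: "dif f \<Longrightarrow> dif g \<Longrightarrow> dif (\<lambda>q. f q + g q)" unfolding dif_def by auto
lemma dif_mult: "dif f \<Longrightarrow> dif g \<Longrightarrow> dif (\<lambda>q. f q * g q)" unfolding dif_def by auto
lemma dif_sum: "finite A \<Longrightarrow> (\<And>i. i \<in> A \<Longrightarrow> dif (f i)) \<Longrightarrow> dif (\<lambda>q. \<Sum>i\<in>A. f i q)"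
  unfolding dif_def by (auto intro!: differentiable_sum)

lemma pd_add_fun: "dif f \<Longrightarrow> dif g \<Longrightarrow> pd a (\<lambda>q. f q + g q) = (\<lambda>q. pd a f q + pd a g q)"
  unfolding dif_def by (auto intro!: pd_add)
lemma pd_mult_fun: "dif f \<Longrightarrow> dif g \<Longrightarrow> pd a (\<lambda>q. f q * g q) = (\<lambda>q. pd a f q * g q + f q * pd a g q)"
  unfolding dif_def by (auto intro!: pd_mult)
lemma pd_const_fun: "pd a (\<lambda>q. c) = (\<lambda>q. 0)" by (auto simp: pd_const)
lemma pd_coord_fun: "pd a (\<lambda>q. q $ b) = (\<lambda>q. if a = b then 1 else 0)" by (auto simp: pd_coord)
lemma pd_sum_fun: "finite A \<Longrightarrow> (\<And>i. i \<in> A \<Longrightarrow> dif (f i)) \<Longrightarrow>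
   pd a (\<lambda>q. \<Sum>i\<in>A. f i q) = (\<lambda>q. \<Sum>i\<in>A. pd a (f i) q)"
  unfolding dif_def by (auto intro!: pd_sum)
lemma pd_cmult_fun: "dif f \<Longrightarrow> pd a (\<lambda>q. c * f q) = (\<lambda>q. c * pd a f q)"
  unfolding dif_def by (auto intro!: pd_cmult)
lemma pd_minus_fun: "dif f \<Longrightarrow> dif g \<Longrightarrow> pd a (\<lambda>q. f q - g q) = (\<lambda>q. pd a f q - pd a g q)"
  unfolding dif_def by (auto intro!: pd_minus)

definition su :: "nat \<Rightarrow> (pt \<Rightarrow> real) \<Rightarrow> bool" where
  "su n f \<longleftrightarrow> (\<forall>ds. length ds \<le> n \<longrightarrow> dif (foldr pd ds f))"

lemma su_0: "su 0 f \<longleftrightarrow> dif f" unfolding su_def by auto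

lemma su_Suc: "su (Suc n) f \<longleftrightarrow> dif f \<and> (\<forall>a. su n (pd a f))"
proof
  assume h: "su (Suc n) f"
  have "dif f" using h[unfolded su_def, rule_format, of "[]"] by simp
  moreover have "su n (pd a f)" for a
    unfolding su_def
  proof (intro allI impI)
    fix ds :: "4 list" assume "length ds \<le> n"
    then show "dif (foldr pd ds (pd a f))"
      using h[unfolded su_def, rule_format, of "ds @ [a]"] by simp
  qed
  ultimately show "dif f \<and> (\<forall>a. su n (pd a f))" by blast
next
  assume h: "dif f \<and> (\<forall>a. su n (pd a f))"
  show "su (Suc n) f" unfolding su_def
  proof (intro allI impI)
    fix ds :: "4 list" assume l: "length ds \<le> Suc n"
    show "dif (foldr pd ds f)"
    proof (cases ds rule: rev_exhaust)
      case Nil then show ?thesis using h by simp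
    next
      case (snoc ys a)
      then have "length ys \<le> n" using l by simp
      then show ?thesis using h snoc unfolding su_def by simp
    qed
  qed
qed

lemma su_mono: "su (Suc n) f \<Longrightarrow> su n f" unfolding su_def by auto

lemma smooth_su: "smooth f \<longleftrightarrow> (\<forall>n. su n f)"
  unfolding smooth_def su_def dif_def by auto

lemma su_dif: "su n f \<Longrightarrow> dif f" unfolding su_def by (metis foldr.simps(1) id_apply le0 list.size(3))

lemma su_const: "su n (\<lambda>q. c)"
proof (induction n arbitrary: c)
  case 0 then show ?case by (simp add: su_0)
next
  case (Suc n) then show ?case by (simp add: su_Suc pd_const_fun)
qed

lemma su_coord: "su n (\<lambda>q. q $ b)"
  by (induction n) (auto simp: su_0 su_Suc pd_coord_fun su_const)

lemma su_add: "su n f \<Longrightarrow> su n g \<Longrightarrow> su n (\<lambda>q. f q + g q)"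
proof (induction n arbitrary: f g)
  case 0 then show ?case by (simp add: su_0 dif_add)
next
  case (Suc n)
  then show ?case using su_dif[OF Suc.prems(1)] su_dif[OF Suc.prems(2)]
    by (auto simp: su_Suc dif_add pd_add_fun)
qed

lemma su_mult: "su n f \<Longrightarrow> su n g \<Longrightarrow> su n (\<lambda>q. f q * g q)"
proof (induction n arbitrary: f g)
  case 0 then show ?case by (simp add: su_0 dif_mult)
next
  case (Suc n)
  have df: "dif f" and dg: "dif g" using su_dif Suc.prems by blast+
  have "su n (pd a (\<lambda>q. f q * g q))" for a
  proof -
    have "su n (\<lambda>q. pd a f q * g q)" using Suc su_mono su_Suc by blast
    moreover have "su n (\<lambda>q. f q * pd a g q)" using Suc su_mono su_Suc by blast
    ultimately show ?thesis by (simp add: pd_mult_fun[OF df dg] su_add)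
  qed
  then show ?case by (simp add: su_Suc dif_mult df dg)
qed

lemma su_sum: "finite A \<Longrightarrow> (\<And>i. i \<in> A \<Longrightarrow> su n (f i)) \<Longrightarrow> su n (\<lambda>q. \<Sum>i\<in>A. f i q)"
  by (induction A rule: finite_induct) (auto simp: su_const su_add)

lemma smooth_const[simp]: "smooth (\<lambda>q. c)" by (simp add: smooth_su su_const)
lemma smooth_coord[simp]: "smooth (\<lambda>q. q $ b)" by (simp add: smooth_su su_coord)
lemma smooth_add: "smooth f \<Longrightarrow> smooth g \<Longrightarrow> smooth (\<lambda>q. f q + g q)" by (simp add: smooth_su su_add)
lemma smooth_mult: "smooth f \<Longrightarrow> smooth g \<Longrightarrow> smooth (\<lambda>q. f q * g q)" by (simp add: smooth_su su_mult)
lemma smooth_sum: "finite A \<Longrightarrow> (\<And>i. i \<in> A \<Longrightarrow> smooth (f i)) \<Longrightarrow> smooth (\<lambda>q. \<Sum>i\<in>A. f i q)"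
  by (simp add: smooth_su su_sum)
lemma smooth_pd: "smooth f \<Longrightarrow> smooth (pd a f)" by (meson smooth_su su_Suc)
lemma smooth_dif: "smooth f \<Longrightarrow> dif f" using smooth_su su_dif by blast
lemma smooth_cmult: "smooth f \<Longrightarrow> smooth (\<lambda>q. c * f q)" by (simp add: smooth_mult)
lemma smooth_minus: "smooth f \<Longrightarrow> smooth g \<Longrightarrow> smooth (\<lambda>q. f q - g q)"
proof -
  assume a: "smooth f" "smooth g"
  have b: "smooth (\<lambda>q. (-1) * g q)" using a smooth_cmult by blast
  show ?thesis using smooth_add[OF a(1) b] by simp
qed


lemma pd_dir_at:
  assumes "dif f"
  shows "((\<lambda>s. f (q + s *\<^sub>R axis a 1)) has_real_derivative pd a f (q + s *\<^sub>R axis a 1)) (at s)"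
proof -
  have "((\<lambda>x. f ((q + s *\<^sub>R axis a 1) + x *\<^sub>R axis a 1)) has_real_derivative pd a f (q + s *\<^sub>R axis a 1)) (at 0)"
    using assms unfolding dif_def by (intro pd_dir) auto
  then have "((\<lambda>x. f (q + (x + s) *\<^sub>R axis a 1)) has_real_derivative pd a f (q + s *\<^sub>R axis a 1)) (at 0)"
    by (simp add: algebra_simps scaleR_add_left)
  then show ?thesis using DERIV_shift[of "\<lambda>x. f (q + x *\<^sub>R axis a 1)" _ 0 s] by simp
qed

lemma schwarz_lim:
  assumes df: "dif f" and dg: "pd a f differentiable (at p)"
  shows "((\<lambda>h. (f (p + h *\<^sub>R axis a 1 + h *\<^sub>R axis b 1) - f (p + h *\<^sub>R axis a 1)
           - f (p + h *\<^sub>R axis b 1) + f p) / h^2) \<longlongrightarrow> pd b (pd a f) p) (at_right 0)"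
proof -
  define ea :: pt where "ea = axis a 1"
  define eb :: pt where "eb = axis b 1"
  define g where "g = pd a f"
  obtain G where G: "(g has_derivative G) (at p)" using dg unfolding g_def differentiable_def by blast
  have lin: "linear G" using G has_derivative_linear by blast
  have pG: "pd b g p = G eb" using pd_has[OF G] eb_def by simp
  have nea: "norm ea = 1" "norm eb = 1" unfolding ea_def eb_def by simp_all
  have key: "\<exists>d>0. \<forall>h. 0 < h \<and> h < d \<longrightarrow>
      \<bar>(f (p + h *\<^sub>R ea + h *\<^sub>R eb) - f (p + h *\<^sub>R ea) - f (p + h *\<^sub>R eb) + f p) / h^2 - G eb\<bar> \<le> 3 * e"
    if e: "e > 0" for e
  proof -
    obtain d where d: "d > 0" and dd: "\<And>y. norm (y - p) < d \<Longrightarrow> norm (g y - g p - G (y - p)) \<le> e * norm (y - p)"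
      using G e unfolding has_derivative_at_alt by blast
    have "\<forall>h. 0 < h \<and> h < d/2 \<longrightarrow>
      \<bar>(f (p + h *\<^sub>R ea + h *\<^sub>R eb) - f (p + h *\<^sub>R ea) - f (p + h *\<^sub>R eb) + f p) / h^2 - G eb\<bar> \<le> 3 * e"
    proof (intro allI impI)
      fix h :: real assume h: "0 < h \<and> h < d/2"
      define \<phi> where "\<phi> s = f ((p + h *\<^sub>R eb) + s *\<^sub>R ea) - f (p + s *\<^sub>R ea)" for s
      have der: "DERIV \<phi> s :> (g (p + h *\<^sub>R eb + s *\<^sub>R ea) - g (p + s *\<^sub>R ea))" for s
        unfolding \<phi>_def g_def ea_def
        by (intro DERIV_diff pd_dir_at df)
      obtain z where z: "0 < z" "z < h" "\<phi> h - \<phi> 0 = (h - 0) * (g (p + h *\<^sub>R eb + z *\<^sub>R ea) - g (p + z *\<^sub>R ea))"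
        using MVT2[of 0 h \<phi>, OF _ der] h by blast
      have eq: "f (p + h *\<^sub>R ea + h *\<^sub>R eb) - f (p + h *\<^sub>R ea) - f (p + h *\<^sub>R eb) + f p = \<phi> h - \<phi> 0"
        unfolding \<phi>_def by (simp add: algebra_simps)
      define v1 where "v1 = h *\<^sub>R eb + z *\<^sub>R ea"
      define v2 where "v2 = z *\<^sub>R ea"
      have n1: "norm v1 \<le> 2 * h" unfolding v1_def
        using norm_triangle_ineq[of "h *\<^sub>R eb" "z *\<^sub>R ea"] nea h z by simp
      have n2: "norm v2 \<le> h" unfolding v2_def using nea z by simp
      have "\<bar>g (p + v1) - g p - G v1\<bar> \<le> e * norm v1"
        using dd[of "p + v1"] n1 h by simp
      also have "\<dots> \<le> e * (2*h)" using n1 e by (intro mult_left_mono) auto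
      finally have e1: "\<bar>g (p + v1) - g p - G v1\<bar> \<le> e * (2*h)" .
      have "\<bar>g (p + v2) - g p - G v2\<bar> \<le> e * norm v2"
        using dd[of "p + v2"] n2 h by simp
      also have "\<dots> \<le> e * h" using n2 e by (intro mult_left_mono) auto
      finally have e2: "\<bar>g (p + v2) - g p - G v2\<bar> \<le> e * h" .
      have Gd: "G v1 - G v2 = h * G eb"
        unfolding v1_def v2_def using lin by (simp add: linear_add linear_scale)
      have "\<bar>(g (p + v1) - g (p + v2)) - h * G eb\<bar> \<le> 3 * e * h"
        using e1 e2 Gd by linarith
      moreover have "\<phi> h - \<phi> 0 = h * (g (p + v1) - g (p + v2))"
        using z(3) unfolding v1_def v2_def by (simp add: add.assoc)
      ultimately have "\<bar>(\<phi> h - \<phi> 0) - h * h * G eb\<bar> \<le> h * (3 * e * h)"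
      proof -
        assume A: "\<bar>(g (p + v1) - g (p + v2)) - h * G eb\<bar> \<le> 3 * e * h"
          and B: "\<phi> h - \<phi> 0 = h * (g (p + v1) - g (p + v2))"
        have "(\<phi> h - \<phi> 0) - h * h * G eb = h * ((g (p + v1) - g (p + v2)) - h * G eb)"
          using B by (simp add: algebra_simps)
        then have "\<bar>(\<phi> h - \<phi> 0) - h * h * G eb\<bar> = h * \<bar>(g (p + v1) - g (p + v2)) - h * G eb\<bar>"
          using h by (simp add: abs_mult)
        then show ?thesis using A h by (simp add: mult_left_mono)
      qed
      then have "\<bar>((\<phi> h - \<phi> 0) - h * h * G eb) / h^2\<bar> \<le> 3 * e"
        using h by (simp add: power2_eq_square abs_divide divide_le_eq mult.commute mult.left_commute)
      moreover have "((\<phi> h - \<phi> 0) - h * h * G eb) / h^2 = (\<phi> h - \<phi> 0) / h^2 - G eb"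
        using h by (simp add: power2_eq_square diff_divide_distrib)
      ultimately show "\<bar>(f (p + h *\<^sub>R ea + h *\<^sub>R eb) - f (p + h *\<^sub>R ea) - f (p + h *\<^sub>R eb) + f p) / h^2 - G eb\<bar> \<le> 3 * e"
        using eq by simp
    qed
    then show ?thesis using d by (intro exI[of _ "d/2"]) auto
  qed
  have "((\<lambda>h. (f (p + h *\<^sub>R ea + h *\<^sub>R eb) - f (p + h *\<^sub>R ea) - f (p + h *\<^sub>R eb) + f p) / h^2) \<longlongrightarrow> G eb) (at_right 0)"
    unfolding tendsto_iff eventually_at_right_field
  proof (intro allI impI)
    fix e :: real assume "e > 0"
    then obtain d where "d > 0" and dd: "\<forall>h. 0 < h \<and> h < d \<longrightarrow>
      \<bar>(f (p + h *\<^sub>R ea + h *\<^sub>R eb) - f (p + h *\<^sub>R ea) - f (p + h *\<^sub>R eb) + f p) / h^2 - G eb\<bar> \<le> 3 * (e/4)"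
      using key[of "e/4"] by auto
    then show "\<exists>b>0. \<forall>y>0. y < b \<longrightarrow> dist ((f (p + y *\<^sub>R ea + y *\<^sub>R eb) - f (p + y *\<^sub>R ea) - f (p + y *\<^sub>R eb) + f p) / y\<^sup>2) (G eb) < e"
      using \<open>e > 0\<close> by (intro exI[of _ d]) (auto simp: dist_real_def)
  qed
  then show ?thesis using pG unfolding g_def ea_def eb_def by simp
qed

lemma schwarz:
  assumes df: "dif f" and "pd a f differentiable (at p)" "pd b f differentiable (at p)"
  shows "pd b (pd a f) p = pd a (pd b f) p"
proof -
  note l1 = schwarz_lim[OF df assms(2), of b]
  note l2 = schwarz_lim[OF df assms(3), of a]
  have "(\<lambda>h. (f (p + h *\<^sub>R axis b 1 + h *\<^sub>R axis a 1) - f (p + h *\<^sub>R axis b 1)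
           - f (p + h *\<^sub>R axis a 1) + f p) / h^2) =
        (\<lambda>h. (f (p + h *\<^sub>R axis a 1 + h *\<^sub>R axis b 1) - f (p + h *\<^sub>R axis a 1)
           - f (p + h *\<^sub>R axis b 1) + f p) / h^2)"
    by (simp add: algebra_simps)
  from tendsto_unique[OF trivial_limit_at_right_real l1 l2[unfolded this]] show ?thesis .
qed

lemma schwarz_smooth: "smooth f \<Longrightarrow> pd b (pd a f) = pd a (pd b f)"
  by (rule ext, rule schwarz) (auto simp: smooth_dif smooth_pd smooth_dif[unfolded dif_def])


lemma apZ_Om_fun: "apZ (Om a b) f = (\<lambda>p. (mdiag a * p $ a) * pd b f p - (mdiag b * p $ b) * pd a f p)"
  by (auto simp: xlow_def)
lemma apZ_Sc_fun: "apZ Sc f = (\<lambda>p. \<Sum>a\<in>UNIV. p $ a * pd a f p)" by auto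
lemma apZ_Dz_fun: "apZ (Dz a) f = pd a f" by auto

lemma smooth_apZ: "smooth f \<Longrightarrow> smooth (apZ Z f)"
proof (cases Z)
  case (Dz a) assume "smooth f" then show ?thesis using Dz by (simp add: apZ_Dz_fun smooth_pd)
next
  case (Om a b) assume s: "smooth f"
  have "smooth (\<lambda>p. (mdiag a * p $ a) * pd b f p)"
    by (intro smooth_mult smooth_cmult smooth_pd s smooth_coord)
  moreover have "smooth (\<lambda>p. (mdiag b * p $ b) * pd a f p)"
    by (intro smooth_mult smooth_cmult smooth_pd s smooth_coord)
  ultimately show ?thesis using Om by (simp add: apZ_Om_fun smooth_minus)
next
  case Sc assume s: "smooth f"
  show ?thesis using Sc by (simp only: apZ_Sc_fun) (intro smooth_sum smooth_mult smooth_coord smooth_pd s, auto)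
qed

lemma hatZ_fun: "hatZ Z f = (\<lambda>p. apZ Z f p + cZ Z * f p)" by (auto simp: hatZ_def)

lemma smooth_hatZ: "smooth f \<Longrightarrow> smooth (hatZ Z f)"
  unfolding hatZ_fun by (intro smooth_add smooth_cmult smooth_apZ)

lemma smooth_ZI: "smooth f \<Longrightarrow> smooth (ZI I f)"
  unfolding ZI_def by (induction I) (auto simp: smooth_apZ)

lemma smooth_hatZI: "smooth f \<Longrightarrow> smooth (hatZI I f)"
  unfolding hatZI_def by (induction I) (auto simp: smooth_hatZ)

lemma apZ_add: "dif f \<Longrightarrow> dif g \<Longrightarrow> apZ Z (\<lambda>q. f q + g q) = (\<lambda>q. apZ Z f q + apZ Z g q)"
  by (cases Z) (auto simp: pd_add_fun algebra_simps sum.distrib xlow_def)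

lemma apZ_cmult: "dif f \<Longrightarrow> apZ Z (\<lambda>q. c * f q) = (\<lambda>q. c * apZ Z f q)"
  by (cases Z) (auto simp: pd_cmult_fun algebra_simps sum_distrib_left xlow_def)

lemma apZ_zero: "apZ Z (\<lambda>q. 0) = (\<lambda>q. 0)"
  by (cases Z) (auto simp: pd_const_fun)

lemma apZ_sum: "finite A \<Longrightarrow> (\<And>i. i \<in> A \<Longrightarrow> dif (f i)) \<Longrightarrow>
   apZ Z (\<lambda>q. \<Sum>i\<in>A. f i q) = (\<lambda>q. \<Sum>i\<in>A. apZ Z (f i) q)"
proof (induction A rule: finite_induct)
  case empty then show ?case by (simp add: apZ_zero)
next
  case (insert x F)
  have "apZ Z (\<lambda>q. \<Sum>i\<in>insert x F. f i q) = apZ Z (\<lambda>q. f x q + (\<Sum>i\<in>F. f i q))"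
    using insert by simp
  also have "\<dots> = (\<lambda>q. apZ Z (f x) q + apZ Z (\<lambda>q. \<Sum>i\<in>F. f i q) q)"
    using insert by (intro apZ_add dif_sum) auto
  finally show ?case using insert by simp
qed

lemma apZ_mult: "dif f \<Longrightarrow> dif g \<Longrightarrow> apZ Z (\<lambda>q. f q * g q) = (\<lambda>q. apZ Z f q * g q + f q * apZ Z g q)"
proof (cases Z)
  case Sc
  assume d: "dif f" "dif g"
  show ?thesis using Sc
    by (auto simp: pd_mult_fun[OF d] sum.distrib sum_distrib_left sum_distrib_right algebra_simps intro!: ext sum.cong)
qed (auto simp: pd_mult_fun algebra_simps xlow_def)

lemma hatZ_add: "dif f \<Longrightarrow> dif g \<Longrightarrow> hatZ Z (\<lambda>q. f q + g q) = (\<lambda>q. hatZ Z f q + hatZ Z g q)"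
  by (simp add: hatZ_fun apZ_add algebra_simps)

lemma hatZ_zero: "hatZ Z (\<lambda>q. 0) = (\<lambda>q. 0)"
  by (simp add: hatZ_fun apZ_zero)

fun comm :: "zf \<Rightarrow> 4 \<Rightarrow> (pt \<Rightarrow> real) \<Rightarrow> pt \<Rightarrow> real" where
  "comm (Dz c) b f q = 0"
| "comm (Om c d) b f q = (if b = c then mdiag c * pd d f q else 0) - (if b = d then mdiag d * pd c f q else 0)"
| "comm Sc b f q = pd b f q"

lemma sum_UNIV4: "sum f (UNIV::4 set) = f 0 + f 1 + f 2 + f 3"
proof -
  have "sum f (UNIV::4 set) = f 1 + f 2 + f 3 + f 4" by (rule sum_4)
  moreover have "(4::4) = 0" by simp
  ultimately show ?thesis by (simp add: algebra_simps)
qed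

lemma pd_apZ:
  assumes s: "smooth f"
  shows "pd b (apZ Z f) = (\<lambda>q. apZ Z (pd b f) q + comm Z b f q)"
proof (cases Z)
  case (Dz c)
  then show ?thesis using schwarz_smooth[OF s] by (simp add: apZ_Dz_fun)
next
  case (Om c d)
  have df: "dif (pd d f)" "dif (pd c f)" using s by (simp_all add: smooth_dif smooth_pd)
  have dx: "dif (\<lambda>p. mdiag c * p $ c)" "dif (\<lambda>p. mdiag d * p $ d)"
    using smooth_dif smooth_cmult smooth_coord by blast+
  have "pd b (apZ Z f) = pd b (\<lambda>p. (mdiag c * p $ c) * pd d f p - (mdiag d * p $ d) * pd c f p)"
    using Om by (simp add: apZ_Om_fun)
  also have "\<dots> = (\<lambda>q. pd b (\<lambda>p. (mdiag c * p $ c) * pd d f p) q - pd b (\<lambda>p. (mdiag d * p $ d) * pd c f p) q)"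
    by (intro pd_minus_fun dif_mult df dx)
  also have "\<dots> = (\<lambda>q. (pd b (\<lambda>p. mdiag c * p $ c) q * pd d f q + (mdiag c * q $ c) * pd b (pd d f) q)
       - (pd b (\<lambda>p. mdiag d * p $ d) q * pd c f q + (mdiag d * q $ d) * pd b (pd c f) q))"
    by (simp add: pd_mult_fun[OF dx(1) df(1)] pd_mult_fun[OF dx(2) df(2)])
  also have "\<dots> = (\<lambda>q. apZ Z (pd b f) q + comm Z b f q)"
    using Om by (auto simp: pd_cmult_fun pd_coord_fun schwarz_smooth[OF s] xlow_def algebra_simps)
  finally show ?thesis .
next
  case Sc
  have df: "\<And>a. dif (pd a f)" using s by (simp add: smooth_dif smooth_pd)
  have "pd b (apZ Z f) = pd b (\<lambda>p. \<Sum>a\<in>UNIV. p $ a * pd a f p)" using Sc by (simp only: apZ_Sc_fun)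
  also have "\<dots> = (\<lambda>q. \<Sum>a\<in>UNIV. pd b (\<lambda>p. p $ a * pd a f p) q)"
    by (intro pd_sum_fun dif_mult df dif_coord) auto
  also have "\<dots> = (\<lambda>q. \<Sum>a\<in>UNIV. (if b = a then 1 else 0) * pd a f q + q $ a * pd b (pd a f) q)"
    by (simp add: pd_mult_fun[OF dif_coord df] pd_coord_fun)
  also have "\<dots> = (\<lambda>q. pd b f q + (\<Sum>a\<in>UNIV. q $ a * pd a (pd b f) q))"
    by (simp add: sum.distrib schwarz_smooth[OF s] of_bool_def[symmetric] cong: if_cong)
  finally show ?thesis using Sc by (simp add: add.commute)
qed


definition Dop :: "(4 \<Rightarrow> 4 \<Rightarrow> pt \<Rightarrow> real) \<Rightarrow> (pt \<Rightarrow> real) \<Rightarrow> pt \<Rightarrow> real" where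
  "Dop P \<psi> q = (\<Sum>a\<in>UNIV. \<Sum>b\<in>UNIV. P a b q * pd a (pd b \<psi>) q)"

fun AZ :: "zf \<Rightarrow> (4 \<Rightarrow> 4 \<Rightarrow> pt \<Rightarrow> real) \<Rightarrow> 4 \<Rightarrow> 4 \<Rightarrow> pt \<Rightarrow> real" where
  "AZ (Dz c) P a b q = 0"
| "AZ Sc P a b q = 0"
| "AZ (Om c d) P a b q = mdiag d * ((if a = c then P d b q else 0) + (if b = c then P a d q else 0))
      - mdiag c * ((if a = d then P c b q else 0) + (if b = d then P a c q else 0))"

definition LZ :: "zf \<Rightarrow> (4 \<Rightarrow> 4 \<Rightarrow> pt \<Rightarrow> real) \<Rightarrow> 4 \<Rightarrow> 4 \<Rightarrow> pt \<Rightarrow> real" where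
  "LZ Z P a b = (\<lambda>q. apZ Z (P a b) q + AZ Z P a b q)"

lemma comm_fun_Om: "comm (Om c d) b f = (\<lambda>q. (if b = c then mdiag c * pd d f q else 0) - (if b = d then mdiag d * pd c f q else 0))"
  by auto
lemma comm_fun_Sc: "comm Sc b f = pd b f" by auto
lemma comm_fun_Dz: "comm (Dz c) b f = (\<lambda>q. 0)" by auto

lemma smooth_uminus: "smooth f \<Longrightarrow> smooth (\<lambda>q. - f q)"
  using smooth_cmult[of f "-1"] by simp
lemma pd_uminus_fun: "dif f \<Longrightarrow> pd a (\<lambda>q. - f q) = (\<lambda>q. - pd a f q)"
  using pd_cmult_fun[of f a "-1"] by simp

lemma mif1: "(x::real) * (if P then y else 0) = (if P then x * y else 0)" by simp
lemma mif2: "(if P then y else 0) * (x::real) = (if P then y * x else 0)" by simp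
lemma sum_if_out: "(\<Sum>b\<in>A. if P then X b else (0::real)) = (if P then \<Sum>b\<in>A. X b else 0)" by simp

lemma smooth_comm: "smooth f \<Longrightarrow> smooth (comm Z b f)"
proof (cases Z)
  case (Om c d)
  assume s: "smooth f"
  have "smooth (\<lambda>q. mdiag c * pd d f q)" "smooth (\<lambda>q. mdiag d * pd c f q)"
    using s by (simp_all add: smooth_cmult smooth_pd)
  then show ?thesis using Om
    by (cases "b = c"; cases "b = d") (simp_all add: comm_fun_Om smooth_minus smooth_uminus)
qed (auto simp: comm_fun_Sc comm_fun_Dz smooth_pd)

lemma pd_comm_Om: "smooth f \<Longrightarrow> pd a (comm (Om c d) b f) q =
   (if b = c then mdiag c * pd a (pd d f) q else 0) - (if b = d then mdiag d * pd a (pd c f) q else 0)"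
proof -
  assume s: "smooth f"
  have d1: "dif (\<lambda>q. mdiag c * pd d f q)" "dif (\<lambda>q. mdiag d * pd c f q)" "dif (pd d f)" "dif (pd c f)"
    using s by (simp_all add: smooth_dif smooth_cmult smooth_pd)
  show ?thesis
    by (cases "b = c"; cases "b = d")
       (simp_all add: comm_fun_Om pd_minus_fun d1 pd_cmult_fun pd_const_fun pd_uminus_fun dif_def[symmetric])
qed

lemma apZ_g:
  assumes s: "smooth \<psi>"
  shows "apZ Z (pd a (pd b \<psi>)) q = pd a (pd b (apZ Z \<psi>)) q - pd a (comm Z b \<psi>) q - comm Z a (pd b \<psi>) q"
proof -
  have sb: "smooth (pd b \<psi>)" using s smooth_pd by blast
  have "pd b (apZ Z \<psi>) = (\<lambda>q. apZ Z (pd b \<psi>) q + comm Z b \<psi> q)" by (rule pd_apZ[OF s])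
  then have "pd a (pd b (apZ Z \<psi>)) = (\<lambda>q. pd a (apZ Z (pd b \<psi>)) q + pd a (comm Z b \<psi>) q)"
    using s by (simp add: pd_add_fun smooth_dif smooth_apZ smooth_pd smooth_comm)
  moreover have "pd a (apZ Z (pd b \<psi>)) = (\<lambda>q. apZ Z (pd a (pd b \<psi>)) q + comm Z a (pd b \<psi>) q)"
    by (rule pd_apZ[OF sb])
  ultimately show ?thesis by (simp add: fun_eq_iff)
qed

lemma comm_sum_identity:
  assumes s: "smooth \<psi>"
  shows "(\<Sum>a\<in>UNIV. \<Sum>b\<in>UNIV. P a b q * (pd a (comm Z b \<psi>) q + comm Z a (pd b \<psi>) q))
     = cZ Z * (\<Sum>a\<in>UNIV. \<Sum>b\<in>UNIV. P a b q * pd a (pd b \<psi>) q)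
       - (\<Sum>a\<in>UNIV. \<Sum>b\<in>UNIV. AZ Z P a b q * pd a (pd b \<psi>) q)"
proof (cases Z)
  case (Dz c) then show ?thesis by (simp add: cZ_def pd_const_fun comm_fun_Dz)
next
  case Sc then show ?thesis
    by (simp add: cZ_def comm_fun_Sc sum_distrib_left algebra_simps sum.distrib)
next
  case (Om c d)
  have "cZ Z = 0" using Om by (simp add: cZ_def)
  then show ?thesis using Om
    apply (simp add: pd_comm_Om[OF s] right_diff_distrib distrib_left distrib_right left_diff_distrib
      sum.distrib sum_subtractf mif1 mif2 sum_if_out sum.delta sum.delta' sum_distrib_left)
    apply (simp add: mult_ac)
    done
qed


lemma Dop_fun: "Dop P \<psi> = (\<lambda>q. \<Sum>a\<in>UNIV. \<Sum>b\<in>UNIV. P a b q * pd a (pd b \<psi>) q)"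
  by (auto simp: Dop_def)

lemma smooth_Dop: "smooth \<psi> \<Longrightarrow> (\<And>a b. smooth (P a b)) \<Longrightarrow> smooth (Dop P \<psi>)"
  unfolding Dop_fun by (intro smooth_sum smooth_mult smooth_pd) auto

lemma hatZ_Dop:
  assumes s: "smooth \<psi>" and sP: "\<And>a b. smooth (P a b)"
  shows "hatZ Z (Dop P \<psi>) q = Dop P (apZ Z \<psi>) q + Dop (LZ Z P) \<psi> q"
proof -
  define g where "g a b = pd a (pd b \<psi>)" for a b
  have sg: "smooth (g a b)" for a b unfolding g_def using s by (simp add: smooth_pd)
  have dPg: "dif (\<lambda>q. P a b q * g a b q)" for a b using sg sP by (simp add: smooth_dif smooth_mult)
  have "apZ Z (Dop P \<psi>) = apZ Z (\<lambda>q. \<Sum>a\<in>UNIV. \<Sum>b\<in>UNIV. P a b q * g a b q)"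
    unfolding Dop_fun g_def ..
  also have "\<dots> = (\<lambda>q. \<Sum>a\<in>UNIV. apZ Z (\<lambda>q. \<Sum>b\<in>UNIV. P a b q * g a b q) q)"
    by (intro apZ_sum dif_sum dPg) auto
  also have "\<dots> = (\<lambda>q. \<Sum>a\<in>UNIV. \<Sum>b\<in>UNIV. apZ Z (\<lambda>q. P a b q * g a b q) q)"
    by (subst apZ_sum) (auto intro: dPg)
  also have "\<dots> = (\<lambda>q. \<Sum>a\<in>UNIV. \<Sum>b\<in>UNIV. apZ Z (P a b) q * g a b q + P a b q * apZ Z (g a b) q)"
    by (simp add: apZ_mult smooth_dif sP sg)
  finally have e1: "apZ Z (Dop P \<psi>) q = (\<Sum>a\<in>UNIV. \<Sum>b\<in>UNIV. apZ Z (P a b) q * g a b q + P a b q * apZ Z (g a b) q)"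
    by simp
  have e2: "apZ Z (pd a (pd b \<psi>)) q = pd a (pd b (apZ Z \<psi>)) q - (pd a (comm Z b \<psi>) q + comm Z a (pd b \<psi>) q)" for a b
    using apZ_g[OF s] by simp
  have "hatZ Z (Dop P \<psi>) q = apZ Z (Dop P \<psi>) q + cZ Z * Dop P \<psi> q" by (simp add: hatZ_def)
  also have "\<dots> = (\<Sum>a\<in>UNIV. \<Sum>b\<in>UNIV. apZ Z (P a b) q * g a b q)
      + (\<Sum>a\<in>UNIV. \<Sum>b\<in>UNIV. P a b q * pd a (pd b (apZ Z \<psi>)) q)
      - (\<Sum>a\<in>UNIV. \<Sum>b\<in>UNIV. P a b q * (pd a (comm Z b \<psi>) q + comm Z a (pd b \<psi>) q))
      + cZ Z * (\<Sum>a\<in>UNIV. \<Sum>b\<in>UNIV. P a b q * g a b q)"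
    unfolding e1 Dop_def g_def e2
    by (simp add: right_diff_distrib sum.distrib sum_subtractf)
  also have "\<dots> = (\<Sum>a\<in>UNIV. \<Sum>b\<in>UNIV. apZ Z (P a b) q * g a b q)
      + (\<Sum>a\<in>UNIV. \<Sum>b\<in>UNIV. P a b q * pd a (pd b (apZ Z \<psi>)) q)
      + (\<Sum>a\<in>UNIV. \<Sum>b\<in>UNIV. AZ Z P a b q * g a b q)"
    unfolding comm_sum_identity[OF s] g_def by simp
  also have "\<dots> = Dop P (apZ Z \<psi>) q + Dop (LZ Z P) \<psi> q"
    unfolding Dop_def LZ_def g_def by (simp add: distrib_right sum.distrib)
  finally show ?thesis .
qed


definition dl :: "4 \<Rightarrow> 4 \<Rightarrow> real" where "dl x y = (if x = y then 1 else 0)"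

lemma AZ_Om_fun: "AZ (Om c d) P a b = (\<lambda>q. mdiag d * (dl a c * P d b q + dl b c * P a d q)
      - mdiag c * (dl a d * P c b q + dl b d * P a c q))"
  by (auto simp: dl_def)

lemma apZ_minus: "dif f \<Longrightarrow> dif g \<Longrightarrow> apZ Z (\<lambda>q. f q - g q) = (\<lambda>q. apZ Z f q - apZ Z g q)"
proof -
  assume d: "dif f" "dif g"
  have d2: "dif (\<lambda>q. (-1) * g q)" using d dif_mult dif_const by blast
  have "apZ Z (\<lambda>q. f q - g q) = apZ Z (\<lambda>q. f q + (-1) * g q)" by simp
  also have "\<dots> = (\<lambda>q. apZ Z f q + apZ Z (\<lambda>q. (-1) * g q) q)" by (rule apZ_add[OF d(1) d2])
  also have "\<dots> = (\<lambda>q. apZ Z f q + (-1) * apZ Z g q)" by (simp only: apZ_cmult[OF d(2)])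
  also have "\<dots> = (\<lambda>q. apZ Z f q - apZ Z g q)" by simp
  finally show ?thesis .
qed

lemma AZ_Dz_fun: "AZ (Dz c) P a b = (\<lambda>q. 0)" by auto
lemma AZ_Sc_fun: "AZ Sc P a b = (\<lambda>q. 0)" by auto

lemma apZ_lin4:
  assumes "smooth A" "smooth B" "smooth C" "smooth D"
  shows "apZ Z (\<lambda>q. k1 * (k2 * A q + k3 * B q) - k4 * (k5 * C q + k6 * D q))
    = (\<lambda>q. k1 * (k2 * apZ Z A q + k3 * apZ Z B q) - k4 * (k5 * apZ Z C q + k6 * apZ Z D q))"
proof -
  have s1: "smooth (\<lambda>q. k2 * A q + k3 * B q)" "smooth (\<lambda>q. k5 * C q + k6 * D q)"
    using assms by (auto intro!: smooth_add smooth_cmult)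
  have s2: "smooth (\<lambda>q. k1 * (k2 * A q + k3 * B q))" "smooth (\<lambda>q. k4 * (k5 * C q + k6 * D q))"
    using s1 by (auto intro!: smooth_cmult)
  have s3: "smooth (\<lambda>q. k2 * A q)" "smooth (\<lambda>q. k3 * B q)" "smooth (\<lambda>q. k5 * C q)" "smooth (\<lambda>q. k6 * D q)"
    using assms by (auto intro!: smooth_cmult)
  show ?thesis
    by (simp add: apZ_minus[OF s2[THEN smooth_dif]] apZ_cmult[OF s1(1)[THEN smooth_dif]]
        apZ_cmult[OF s1(2)[THEN smooth_dif]] apZ_add[OF s3(1,2)[THEN smooth_dif]]
        apZ_add[OF s3(3,4)[THEN smooth_dif]] apZ_cmult[OF assms(1)[THEN smooth_dif]]
        apZ_cmult[OF assms(2)[THEN smooth_dif]] apZ_cmult[OF assms(3)[THEN smooth_dif]]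
        apZ_cmult[OF assms(4)[THEN smooth_dif]])
qed

lemma smooth_AZ: "(\<And>a b. smooth (P a b)) \<Longrightarrow> smooth (AZ Z P a b)"
proof (cases Z)
  case (Om c d)
  assume "\<And>a b. smooth (P a b)"
  then show ?thesis unfolding Om AZ_Om_fun
    by (intro smooth_minus smooth_add smooth_cmult) auto
qed (auto simp: AZ_Dz_fun AZ_Sc_fun)

lemma smooth_LZ: "(\<And>a b. smooth (P a b)) \<Longrightarrow> smooth (LZ Z P a b)"
  unfolding LZ_def by (intro smooth_add smooth_apZ smooth_AZ) auto

fun Acomp :: "zf list \<Rightarrow> (4 \<Rightarrow> 4 \<Rightarrow> pt \<Rightarrow> real) \<Rightarrow> 4 \<Rightarrow> 4 \<Rightarrow> pt \<Rightarrow> real" where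
  "Acomp [] P = P"
| "Acomp (Z # As) P = AZ Z (Acomp As P)"

lemma smooth_Acomp: "(\<And>a b. smooth (P a b)) \<Longrightarrow> smooth (Acomp As P a b)"
  by (induction As arbitrary: a b) (auto intro: smooth_AZ)

lemma apZ_AZ:
  assumes "\<And>a b. smooth (Q a b)"
  shows "apZ Z' (AZ Z Q a b) = AZ Z (\<lambda>a b. apZ Z' (Q a b)) a b"
proof (cases Z)
  case (Om c d)
  show ?thesis unfolding Om AZ_Om_fun
    by (rule apZ_lin4) (auto simp: assms)
qed (auto simp: AZ_Dz_fun AZ_Sc_fun apZ_zero)


lemma apZ_Acomp:
  assumes "\<And>a b. smooth (Q a b)"
  shows "apZ Z (Acomp As Q a b) = Acomp As (\<lambda>a b. apZ Z (Q a b)) a b"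
proof (induction As arbitrary: a b)
  case Nil then show ?case by simp
next
  case (Cons Z' As)
  have "apZ Z (Acomp (Z' # As) Q a b) = AZ Z' (\<lambda>a b. apZ Z (Acomp As Q a b)) a b"
    using apZ_AZ[of "Acomp As Q" Z Z'] smooth_Acomp[OF assms] by simp
  also have "(\<lambda>a b. apZ Z (Acomp As Q a b)) = Acomp As (\<lambda>a b. apZ Z (Q a b))"
    using Cons by (simp add: fun_eq_iff)
  finally show ?case by simp
qed

lemma Dop_add: "Dop (\<lambda>a b q. P1 a b q + P2 a b q) \<psi> q = Dop P1 \<psi> q + Dop P2 \<psi> q"
  by (simp add: Dop_def distrib_right sum.distrib)

lemma Dop_cong: "(\<And>a b. P1 a b q = P2 a b q) \<Longrightarrow> Dop P1 \<psi> q = Dop P2 \<psi> q"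
  by (simp add: Dop_def)

lemma ZH_Cons: "(\<lambda>a b. apZ Z (ZH J H a b)) = ZH (Z # J) H"
  by (simp add: ZH_def ZI_def fun_eq_iff)

lemma ZI_Cons: "ZI (Z # K) \<phi> = apZ Z (ZI K \<phi>)" by (simp add: ZI_def)

lemma smooth_ZH: "(\<And>a b. smooth (H a b)) \<Longrightarrow> smooth (ZH J H a b)"
  by (simp add: ZH_def smooth_ZI)

definition trm :: "(4 \<Rightarrow> 4 \<Rightarrow> pt \<Rightarrow> real) \<Rightarrow> (pt \<Rightarrow> real) \<Rightarrow> zf list \<times> zf list \<times> zf list \<Rightarrow> pt \<Rightarrow> real" where
  "trm H \<phi> t = (case t of (As, J, K) \<Rightarrow> Dop (Acomp As (ZH J H)) (ZI K \<phi>))"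

lemma smooth_trm: "(\<And>a b. smooth (H a b)) \<Longrightarrow> smooth \<phi> \<Longrightarrow> smooth (trm H \<phi> t)"
  unfolding trm_def by (cases t) (auto intro!: smooth_Dop smooth_ZI smooth_Acomp smooth_ZH)

lemma hatZ_trm:
  assumes sH: "\<And>a b. smooth (H a b)" and s: "smooth \<phi>"
  shows "hatZ Z (trm H \<phi> (As, J, K)) q = trm H \<phi> (As, J, Z # K) q + trm H \<phi> (As, Z # J, K) q + trm H \<phi> (Z # As, J, K) q"
proof -
  have sQ: "\<And>a b. smooth (ZH J H a b)" using sH smooth_ZH by blast
  have "hatZ Z (trm H \<phi> (As, J, K)) q = Dop (Acomp As (ZH J H)) (apZ Z (ZI K \<phi>)) q + Dop (LZ Z (Acomp As (ZH J H))) (ZI K \<phi>) q"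
    unfolding trm_def by (simp add: hatZ_Dop smooth_ZI s smooth_Acomp sQ)
  also have "Dop (LZ Z (Acomp As (ZH J H))) (ZI K \<phi>) q
      = Dop (Acomp As (ZH (Z # J) H)) (ZI K \<phi>) q + Dop (Acomp (Z # As) (ZH J H)) (ZI K \<phi>) q"
  proof -
    have "Dop (LZ Z (Acomp As (ZH J H))) (ZI K \<phi>) q
       = Dop (\<lambda>a b q. Acomp As (ZH (Z # J) H) a b q + Acomp (Z # As) (ZH J H) a b q) (ZI K \<phi>) q"
      by (rule Dop_cong) (simp add: LZ_def apZ_Acomp[OF sQ] ZH_Cons)
    then show ?thesis by (simp add: Dop_add)
  qed
  finally show ?thesis unfolding trm_def by (simp add: ZI_Cons)
qed

fun trip :: "zf list \<Rightarrow> (zf list \<times> zf list \<times> zf list) list" where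
  "trip [] = [([], [], [])]"
| "trip (Z # I) = concat (map (\<lambda>(As, J, K). [(As, J, Z # K), (As, Z # J, K), (Z # As, J, K)]) (trip I))"

lemma dif_sumlist: "(\<And>t. t \<in> set ts \<Longrightarrow> dif (F t)) \<Longrightarrow> dif (\<lambda>q. sum_list (map (\<lambda>t. F t q) ts))"
  by (induction ts) (auto simp: dif_add)

lemma ZH_Nil: "ZH [] H = H" by (intro ext) (simp add: ZH_def ZI_def)

lemma hatZ_sumlist:
  assumes "\<And>t. t \<in> set ts \<Longrightarrow> dif (F t)"
  shows "hatZ Z (\<lambda>q. sum_list (map (\<lambda>t. F t q) ts)) = (\<lambda>q. sum_list (map (\<lambda>t. hatZ Z (F t) q) ts))"
  using assms
proof (induction ts)
  case Nil then show ?case by (simp add: hatZ_zero)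
next
  case (Cons t ts)
  have d: "dif (\<lambda>q. sum_list (map (\<lambda>t. F t q) ts))"
    using Cons.prems by (intro dif_sumlist) auto
  have "hatZ Z (\<lambda>q. sum_list (map (\<lambda>t. F t q) (t # ts))) = hatZ Z (\<lambda>q. F t q + sum_list (map (\<lambda>t. F t q) ts))"
    by simp
  also have "\<dots> = (\<lambda>q. hatZ Z (F t) q + hatZ Z (\<lambda>q. sum_list (map (\<lambda>t. F t q) ts)) q)"
    using hatZ_add[OF Cons.prems[of t] d] by simp
  finally show ?case using Cons by simp
qed

lemma sum_list_concat_map: "sum_list (map g (concat (map h ts))) = sum_list (map (\<lambda>t. sum_list (map g (h t))) ts)"
  by (induction ts) auto

lemma expansion:
  assumes sH: "\<And>a b. smooth (H a b)" and s: "smooth \<phi>"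
  shows "hatZI I (Dop H \<phi>) = (\<lambda>q. sum_list (map (\<lambda>t. trm H \<phi> t q) (trip I)))"
proof (induction I)
  case Nil then show ?case by (simp add: hatZI_def trm_def ZH_Nil ZI_def)
next
  case (Cons Z I)
  have "hatZI (Z # I) (Dop H \<phi>) = hatZ Z (hatZI I (Dop H \<phi>))" by (simp add: hatZI_def)
  also have "\<dots> = (\<lambda>q. sum_list (map (\<lambda>t. hatZ Z (trm H \<phi> t) q) (trip I)))"
    unfolding Cons by (rule hatZ_sumlist) (simp add: smooth_dif smooth_trm sH s)
  also have "\<dots> = (\<lambda>q. sum_list (map (\<lambda>t. trm H \<phi> t q) (trip (Z # I))))"
    by (auto simp: sum_list_concat_map hatZ_trm[OF sH s] intro!: ext arg_cong[where f=sum_list])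
  finally show ?case .
qed


definition Mt :: "4 \<Rightarrow> 4 \<Rightarrow> pt \<Rightarrow> real" where "Mt a b q = (if a = b then mdiag a else 0)"

lemma box_Dop: "box f = Dop Mt f"
  by (intro ext) (simp add: box_def Dop_def Mt_def mif2 sum.delta)

lemma smooth_Mt: "smooth (Mt a b)"
proof -
  have "Mt a b = (\<lambda>q. if a = b then mdiag a else 0)" by (simp add: Mt_def fun_eq_iff)
  then show "smooth (Mt a b)" by simp
qed

lemma mdiag_sq: "mdiag a * mdiag a = 1" by (simp add: mdiag_def)

lemma LZ_Mt: "LZ Z Mt a b q = 0"
proof -
  have a: "apZ Z (Mt a b) q = 0"
  proof -
    have "Mt a b = (\<lambda>q. if a = b then mdiag a else 0)" by (simp add: Mt_def fun_eq_iff)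
    then show ?thesis by (cases Z) (auto simp: pd_const_fun)
  qed
  have "AZ Z Mt a b q = 0"
    by (cases Z) (auto simp: Mt_def mdiag_sq)
  then show ?thesis using a by (simp add: LZ_def)
qed

lemma Dop_zero: "(\<And>a b. P a b q = 0) \<Longrightarrow> Dop P \<psi> q = 0" by (simp add: Dop_def)

lemma hatZI_box: "smooth \<psi> \<Longrightarrow> hatZI I (Dop Mt \<psi>) = Dop Mt (ZI I \<psi>)"
proof (induction I)
  case Nil then show ?case by (simp add: hatZI_def ZI_def)
next
  case (Cons Z I)
  have sM: "\<And>a b. smooth (Mt a b)"
  proof -
    fix a b have "Mt a b = (\<lambda>q. if a = b then mdiag a else 0)" by (simp add: Mt_def fun_eq_iff)
    then show "smooth (Mt a b)" by simp
  qed
  have "hatZI (Z # I) (Dop Mt \<psi>) = hatZ Z (Dop Mt (ZI I \<psi>))" using Cons by (simp add: hatZI_def)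
  also have "\<dots> = Dop Mt (ZI (Z # I) \<psi>)"
    by (intro ext) (simp add: hatZ_Dop smooth_ZI Cons.prems sM Dop_zero LZ_Mt ZI_Cons)
  finally show ?case .
qed

lemma hatZI_add: "smooth f \<Longrightarrow> smooth g \<Longrightarrow> hatZI I (\<lambda>q. f q + g q) = (\<lambda>q. hatZI I f q + hatZI I g q)"
proof (induction I)
  case Nil then show ?case by (simp add: hatZI_def)
next
  case (Cons Z I)
  have "hatZI (Z # I) (\<lambda>q. f q + g q) = hatZ Z (\<lambda>q. hatZI I f q + hatZI I g q)"
    using Cons by (simp add: hatZI_def)
  also have "\<dots> = (\<lambda>q. hatZ Z (hatZI I f) q + hatZ Z (hatZI I g) q)"
    using Cons.prems by (intro hatZ_add smooth_dif smooth_hatZI)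
  also have "\<dots> = (\<lambda>q. hatZI (Z # I) f q + hatZI (Z # I) g q)"
    by (simp add: hatZI_def)
  finally show ?case .
qed

lemma boxt_fun: "boxt H f = (\<lambda>q. Dop Mt f q + Dop H f q)"
  by (intro ext) (simp add: boxt_def box_Dop Dop_def)

lemma trip_struct: "\<exists>rest. trip I = ([], [], I) # rest \<and> (\<forall>t\<in>set rest. fst t \<noteq> [] \<or> fst (snd t) \<noteq> [])"
proof (induction I)
  case Nil then show ?case by simp
next
  case (Cons Z I)
  then obtain rest where r: "trip I = ([], [], I) # rest" and rr: "\<forall>t\<in>set rest. fst t \<noteq> [] \<or> fst (snd t) \<noteq> []"
    by blast
  define f where "f = (\<lambda>(As, J, K). [(As, J, Z # K), (As, Z # J, K), (Z # As, J, K)])"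
  have "trip (Z # I) = ([], [], Z # I) # (([], [Z], I) # ([Z], [], I) # concat (map f rest))"
    using r by (simp add: f_def)
  moreover have "\<forall>t\<in>set (([], [Z], I) # ([Z], [], I) # concat (map f rest)). fst t \<noteq> [] \<or> fst (snd t) \<noteq> []"
    using rr by (auto simp: f_def split: prod.splits)
  ultimately show ?case by blast
qed

lemma trip_props: "t \<in> set (trip I) \<Longrightarrow> length (fst t) + length (fst (snd t)) + length (snd (snd t)) = length I
   \<and> set (fst t) \<subseteq> set I \<and> set (fst (snd t)) \<subseteq> set I \<and> set (snd (snd t)) \<subseteq> set I"
proof (induction I arbitrary: t)
  case Nil then show ?case by simp
next
  case (Cons Z I)
  then obtain t0 where t0: "t0 \<in> set (trip I)" and
    "t \<in> set ((\<lambda>(As, J, K). [(As, J, Z # K), (As, Z # J, K), (Z # As, J, K)]) t0)"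
    by auto
  then show ?case using Cons.IH[OF t0] by (auto split: prod.splits)
qed

lemma error_formula:
  assumes sH: "\<And>a b. smooth (H a b)" and s: "smooth \<phi>"
    and r: "trip I = ([], [], I) # rest"
  shows "boxt H (ZI I \<phi>) q - hatZI I (boxt H \<phi>) q = - sum_list (map (\<lambda>t. trm H \<phi> t q) rest)"
proof -
  have "hatZI I (boxt H \<phi>) q = hatZI I (Dop Mt \<phi>) q + hatZI I (Dop H \<phi>) q"
    unfolding boxt_fun
    by (subst hatZI_add) (auto intro: smooth_Dop s sH smooth_Mt)
  also have "\<dots> = Dop Mt (ZI I \<phi>) q + Dop H (ZI I \<phi>) q + sum_list (map (\<lambda>t. trm H \<phi> t q) rest)"
    by (simp add: hatZI_box s expansion[OF sH s] r trm_def ZH_Nil)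
  finally show ?thesis by (simp add: boxt_fun)
qed


lemma idL: fixes t r w1 w2 w3 u0 u1 u2 u3 :: real
  assumes h: "w1^2 + w2^2 + w3^2 = 1"
  shows "(t + r) * (u0 + w1*u1 + w2*u2 + w3*u3) = (t*u0 + r*w1*u1 + r*w2*u2 + r*w3*u3)
     - (w1 * (-t*u1 - r*w1*u0) + w2 * (-t*u2 - r*w2*u0) + w3 * (-t*u3 - r*w3*u0))"
  using h by algebra

lemma idU: fixes t r w1 w2 w3 u0 u1 u2 u3 :: real
  assumes h: "w1^2 + w2^2 + w3^2 = 1"
  shows "(t - r) * (u0 - (w1*u1 + w2*u2 + w3*u3)) = (t*u0 + r*w1*u1 + r*w2*u2 + r*w3*u3)
     + (w1 * (-t*u1 - r*w1*u0) + w2 * (-t*u2 - r*w2*u0) + w3 * (-t*u3 - r*w3*u0))"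
  using h by algebra

lemma idS: fixes t r w1 w2 w3 u0 u1 u2 u3 s1 s2 s3 :: real
  assumes h: "w1^2 + w2^2 + w3^2 = 1" and hs: "s1*w1 + s2*w2 + s3*w3 = 0"
  shows "(t + r) * (s1*u1 + s2*u2 + s3*u3) =
     - (s1 * (-t*u1 - r*w1*u0) + s2 * (-t*u2 - r*w2*u0) + s3 * (-t*u3 - r*w3*u0))
     + (s2*w1 - s1*w2) * (r*w1*u2 - r*w2*u1) + (s3*w1 - s1*w3) * (r*w1*u3 - r*w3*u1)
     + (s3*w2 - s2*w3) * (r*w2*u3 - r*w3*u2)"
  using h hs by algebra


lemma abm: fixes a b M :: real shows "\<bar>a\<bar> \<le> 1 \<Longrightarrow> \<bar>b\<bar> \<le> M \<Longrightarrow> \<bar>a * b\<bar> \<le> M"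
proof -
  assume "\<bar>a\<bar> \<le> 1" "\<bar>b\<bar> \<le> M"
  then have "\<bar>a\<bar> * \<bar>b\<bar> \<le> 1 * \<bar>b\<bar>" by (intro mult_right_mono) auto
  then show ?thesis using \<open>\<bar>b\<bar> \<le> M\<close> by (simp add: abs_mult)
qed

lemma abm2: fixes a b M :: real shows "\<bar>a\<bar> \<le> 2 \<Longrightarrow> \<bar>b\<bar> \<le> M \<Longrightarrow> \<bar>a * b\<bar> \<le> 2 * M"
proof -
  assume "\<bar>a\<bar> \<le> 2" "\<bar>b\<bar> \<le> M"
  then have "\<bar>a\<bar> * \<bar>b\<bar> \<le> 2 * \<bar>b\<bar>" by (intro mult_right_mono) auto
  then show ?thesis using \<open>\<bar>b\<bar> \<le> M\<close> by (simp add: abs_mult)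
qed

lemma wt: fixes t r X A B :: real
  assumes "t \<ge> 0" "r \<ge> 0" "\<bar>X\<bar> \<le> A" "(t + r) * \<bar>X\<bar> \<le> B"
  shows "(1 + t + \<bar>r - t\<bar>) * \<bar>X\<bar> \<le> A + 2 * B"
proof -
  have "(1 + t + \<bar>r - t\<bar>) * \<bar>X\<bar> \<le> (1 + 2 * (t + r)) * \<bar>X\<bar>"
    using assms by (intro mult_right_mono) auto
  also have "\<dots> = \<bar>X\<bar> + 2 * ((t + r) * \<bar>X\<bar>)" by (simp add: algebra_simps)
  finally show ?thesis using assms by linarith
qed

lemma wq: fixes t r X :: real
  assumes "t \<ge> 0" "r \<ge> 0" shows "\<bar>r - t\<bar> * \<bar>X\<bar> \<le> (t + r) * \<bar>X\<bar>"
  using assms by (intro mult_right_mono) auto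

lemma w_le1: fixes w1 w2 w3 :: real assumes h: "w1^2 + w2^2 + w3^2 = 1"
  shows "\<bar>w1\<bar> \<le> 1" "\<bar>w2\<bar> \<le> 1" "\<bar>w3\<bar> \<le> 1"
proof -
  have "w1^2 \<le> 1" "w2^2 \<le> 1" "w3^2 \<le> 1" using h zero_le_power2[of w1] zero_le_power2[of w2] zero_le_power2[of w3] by linarith+
  then show "\<bar>w1\<bar> \<le> 1" "\<bar>w2\<bar> \<le> 1" "\<bar>w3\<bar> \<le> 1" by (simp_all add: abs_square_le_1)
qed

locale vfb =
  fixes t r w1 w2 w3 u0 u1 u2 u3 M :: real
  assumes t0: "t \<ge> 0" and r0: "r \<ge> 0" and h: "w1^2 + w2^2 + w3^2 = 1"
    and b0: "\<bar>u0\<bar> \<le> M" and b1: "\<bar>u1\<bar> \<le> M" and b2: "\<bar>u2\<bar> \<le> M" and b3: "\<bar>u3\<bar> \<le> M"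
    and bS: "\<bar>t*u0 + r*w1*u1 + r*w2*u2 + r*w3*u3\<bar> \<le> M"
    and b01: "\<bar>-t*u1 - r*w1*u0\<bar> \<le> M" and b02: "\<bar>-t*u2 - r*w2*u0\<bar> \<le> M" and b03: "\<bar>-t*u3 - r*w3*u0\<bar> \<le> M"
    and b12: "\<bar>r*w1*u2 - r*w2*u1\<bar> \<le> M" and b13: "\<bar>r*w1*u3 - r*w3*u1\<bar> \<le> M" and b23: "\<bar>r*w2*u3 - r*w3*u2\<bar> \<le> M"
begin

lemma wb: "\<bar>w1\<bar> \<le> 1" "\<bar>w2\<bar> \<le> 1" "\<bar>w3\<bar> \<le> 1" using w_le1[OF h] by auto

lemma Xb: "\<bar>u0 + w1*u1 + w2*u2 + w3*u3\<bar> \<le> 4 * M"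
  using abm[OF wb(1) b1] abm[OF wb(2) b2] abm[OF wb(3) b3] b0 by linarith

lemma XbT: "(t + r) * \<bar>u0 + w1*u1 + w2*u2 + w3*u3\<bar> \<le> 4 * M"
proof -
  have "(t + r) * \<bar>u0 + w1*u1 + w2*u2 + w3*u3\<bar> = \<bar>(t + r) * (u0 + w1*u1 + w2*u2 + w3*u3)\<bar>"
    using t0 r0 by (simp add: abs_mult)
  also have "\<dots> \<le> 4 * M" unfolding idL[OF h]
    using abm[OF wb(1) b01] abm[OF wb(2) b02] abm[OF wb(3) b03] bS by linarith
  finally show ?thesis .
qed

lemma Lbound: "(1 + t + \<bar>r - t\<bar>) * \<bar>u0 + w1*u1 + w2*u2 + w3*u3\<bar> \<le> 12 * M"
  using wt[OF t0 r0 Xb XbT] by linarith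

lemma VbT: "\<bar>r - t\<bar> * \<bar>u0 - (w1*u1 + w2*u2 + w3*u3)\<bar> \<le> 4 * M"
proof -
  have "\<bar>r - t\<bar> * \<bar>u0 - (w1*u1 + w2*u2 + w3*u3)\<bar> = \<bar>(t - r) * (u0 - (w1*u1 + w2*u2 + w3*u3))\<bar>"
    by (simp add: abs_mult abs_minus_commute)
  also have "\<dots> \<le> 4 * M" unfolding idU[OF h]
    using abm[OF wb(1) b01] abm[OF wb(2) b02] abm[OF wb(3) b03] bS by linarith
  finally show ?thesis .
qed

lemma Sb:
  assumes s: "\<bar>s1\<bar> \<le> 1" "\<bar>s2\<bar> \<le> 1" "\<bar>s3\<bar> \<le> 1" and hs: "s1*w1 + s2*w2 + s3*w3 = 0"
  shows "\<bar>s1*u1 + s2*u2 + s3*u3\<bar> \<le> 3 * M" and "(t + r) * \<bar>s1*u1 + s2*u2 + s3*u3\<bar> \<le> 9 * M"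
proof -
  show "\<bar>s1*u1 + s2*u2 + s3*u3\<bar> \<le> 3 * M"
    using abm[OF s(1) b1] abm[OF s(2) b2] abm[OF s(3) b3] by linarith
  have c: "\<bar>s2*w1 - s1*w2\<bar> \<le> 2" "\<bar>s3*w1 - s1*w3\<bar> \<le> 2" "\<bar>s3*w2 - s2*w3\<bar> \<le> 2"
  proof -
    have "\<bar>s2*w1\<bar> \<le> 1" "\<bar>s1*w2\<bar> \<le> 1" "\<bar>s3*w1\<bar> \<le> 1" "\<bar>s1*w3\<bar> \<le> 1" "\<bar>s3*w2\<bar> \<le> 1" "\<bar>s2*w3\<bar> \<le> 1"
      using abm[OF s(2) wb(1)] abm[OF s(1) wb(2)] abm[OF s(3) wb(1)] abm[OF s(1) wb(3)]
        abm[OF s(3) wb(2)] abm[OF s(2) wb(3)] by auto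
    then show "\<bar>s2*w1 - s1*w2\<bar> \<le> 2" "\<bar>s3*w1 - s1*w3\<bar> \<le> 2" "\<bar>s3*w2 - s2*w3\<bar> \<le> 2" by linarith+
  qed
  have eq: "(t + r) * (s1*u1 + s2*u2 + s3*u3) =
     - (s1 * (-t*u1 - r*w1*u0) + s2 * (-t*u2 - r*w2*u0) + s3 * (-t*u3 - r*w3*u0))
     + (s2*w1 - s1*w2) * (r*w1*u2 - r*w2*u1) + (s3*w1 - s1*w3) * (r*w1*u3 - r*w3*u1)
     + (s3*w2 - s2*w3) * (r*w2*u3 - r*w3*u2)" by (rule idS[OF h hs])
  have "(t + r) * \<bar>s1*u1 + s2*u2 + s3*u3\<bar> = \<bar>(t + r) * (s1*u1 + s2*u2 + s3*u3)\<bar>"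
    using t0 r0 by (simp add: abs_mult)
  also have "\<dots> \<le> 9 * M" unfolding eq
    using abm[OF s(1) b01] abm[OF s(2) b02] abm[OF s(3) b03] abm2[OF c(1) b12] abm2[OF c(2) b13] abm2[OF c(3) b23]
    by linarith
  finally show "(t + r) * \<bar>s1*u1 + s2*u2 + s3*u3\<bar> \<le> 9 * M" .
qed

lemma Tbound:
  assumes s: "\<bar>s1\<bar> \<le> 1" "\<bar>s2\<bar> \<le> 1" "\<bar>s3\<bar> \<le> 1" and hs: "s1*w1 + s2*w2 + s3*w3 = 0"
  shows "(1 + t + \<bar>r - t\<bar>) * \<bar>s1*u1 + s2*u2 + s3*u3\<bar> \<le> 21 * M"
  using wt[OF t0 r0 Sb[OF s hs]] by linarith

lemma lin_helper: fixes a b c d K :: real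
  shows "a \<le> (b + c) / 2 \<Longrightarrow> d \<le> 4 * K \<Longrightarrow> c \<le> 4 * K \<Longrightarrow> b \<le> d \<Longrightarrow> a \<le> 4 * K"
  by argo

lemma half_tri: fixes c X V :: real assumes "c \<ge> 0"
  shows "c * \<bar>(X + V) / 2\<bar> \<le> (c * \<bar>X\<bar> + c * \<bar>V\<bar>) / 2" "c * \<bar>(X - V) / 2\<bar> \<le> (c * \<bar>X\<bar> + c * \<bar>V\<bar>) / 2"
proof -
  have "c * \<bar>X + V\<bar> \<le> c * (\<bar>X\<bar> + \<bar>V\<bar>)" using assms abs_triangle_ineq by (intro mult_left_mono) auto
  then show "c * \<bar>(X + V) / 2\<bar> \<le> (c * \<bar>X\<bar> + c * \<bar>V\<bar>) / 2" by (simp add: abs_divide algebra_simps)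
  have "c * \<bar>X - V\<bar> \<le> c * (\<bar>X\<bar> + \<bar>V\<bar>)" using assms abs_triangle_ineq4 by (intro mult_left_mono) auto
  then show "c * \<bar>(X - V) / 2\<bar> \<le> (c * \<bar>X\<bar> + c * \<bar>V\<bar>) / 2" by (simp add: abs_divide algebra_simps)
qed

lemma WbT: "\<bar>r - t\<bar> * \<bar>w1*u1 + w2*u2 + w3*u3\<bar> \<le> 4 * M"
proof -
  define X where "X = u0 + w1*u1 + w2*u2 + w3*u3"
  define V where "V = u0 - (w1*u1 + w2*u2 + w3*u3)"
  have e: "w1*u1 + w2*u2 + w3*u3 = (X - V) / 2" unfolding X_def V_def by (simp add: field_simps)
  have "\<bar>r - t\<bar> * \<bar>(X - V) / 2\<bar> \<le> (\<bar>r - t\<bar> * \<bar>X\<bar> + \<bar>r - t\<bar> * \<bar>V\<bar>) / 2" by (rule half_tri) simp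
  moreover have "(t + r) * \<bar>X\<bar> \<le> 4 * M" "\<bar>r - t\<bar> * \<bar>V\<bar> \<le> 4 * M" using XbT VbT unfolding X_def V_def .
  ultimately show ?thesis unfolding e using wq[OF t0 r0, of X] by (rule lin_helper)
qed

lemma G0: "(1 + \<bar>r - t\<bar>) * \<bar>u0\<bar> \<le> 40 * M"
proof -
  define X where "X = u0 + w1*u1 + w2*u2 + w3*u3"
  define V where "V = u0 - (w1*u1 + w2*u2 + w3*u3)"
  have e: "u0 = (X + V) / 2" unfolding X_def V_def by (simp add: field_simps)
  have "\<bar>r - t\<bar> * \<bar>(X + V) / 2\<bar> \<le> (\<bar>r - t\<bar> * \<bar>X\<bar> + \<bar>r - t\<bar> * \<bar>V\<bar>) / 2" by (rule half_tri) simp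
  moreover have "(t + r) * \<bar>X\<bar> \<le> 4 * M" "\<bar>r - t\<bar> * \<bar>V\<bar> \<le> 4 * M" using XbT VbT unfolding X_def V_def .
  ultimately have "\<bar>r - t\<bar> * \<bar>u0\<bar> \<le> 4 * M"
    using wq[OF t0 r0, of X] by (simp only: e[symmetric]) (rule lin_helper)
  then show ?thesis using b0 by (simp add: distrib_right)
qed

lemma Gi_gen:
  assumes s: "\<bar>s1\<bar> \<le> 1" "\<bar>s2\<bar> \<le> 1" "\<bar>s3\<bar> \<le> 1" and hs: "s1*w1 + s2*w2 + s3*w3 = 0"
    and wi: "\<bar>wi\<bar> \<le> 1" and ui: "\<bar>ui\<bar> \<le> M"
    and e: "ui = wi * (w1*u1 + w2*u2 + w3*u3) + (s1*u1 + s2*u2 + s3*u3)"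
  shows "(1 + \<bar>r - t\<bar>) * \<bar>ui\<bar> \<le> 40 * M"
proof -
  have "\<bar>r - t\<bar> * \<bar>ui\<bar> \<le> \<bar>wi\<bar> * (\<bar>r - t\<bar> * \<bar>w1*u1 + w2*u2 + w3*u3\<bar>) + \<bar>r - t\<bar> * \<bar>s1*u1 + s2*u2 + s3*u3\<bar>"
  proof -
    have "\<bar>ui\<bar> \<le> \<bar>wi\<bar> * \<bar>w1*u1 + w2*u2 + w3*u3\<bar> + \<bar>s1*u1 + s2*u2 + s3*u3\<bar>"
      using e abs_triangle_ineq[of "wi * (w1*u1 + w2*u2 + w3*u3)" "s1*u1 + s2*u2 + s3*u3"] by (simp add: abs_mult)
    then have "\<bar>r - t\<bar> * \<bar>ui\<bar> \<le> \<bar>r - t\<bar> * (\<bar>wi\<bar> * \<bar>w1*u1 + w2*u2 + w3*u3\<bar> + \<bar>s1*u1 + s2*u2 + s3*u3\<bar>)"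
      by (intro mult_left_mono) auto
    then show ?thesis by (simp add: algebra_simps)
  qed
  also have "\<dots> \<le> 1 * (4 * M) + 9 * M"
  proof -
    have "\<bar>wi\<bar> * (\<bar>r - t\<bar> * \<bar>w1*u1 + w2*u2 + w3*u3\<bar>) \<le> 1 * (4 * M)"
      using WbT wi by (rule_tac mult_mono) auto
    moreover have "\<bar>r - t\<bar> * \<bar>s1*u1 + s2*u2 + s3*u3\<bar> \<le> 9 * M"
      using wq[OF t0 r0, of "s1*u1 + s2*u2 + s3*u3"] Sb(2)[OF s hs] by linarith
    ultimately show ?thesis by linarith
  qed
  finally show ?thesis using ui by (simp add: distrib_right)
qed

end


lemma four_distinct: "(0::4) \<noteq> 1" "(0::4) \<noteq> 2" "(0::4) \<noteq> 3" "(1::4) \<noteq> 2" "(1::4) \<noteq> 3" "(2::4) \<noteq> 3"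
  by simp_all

lemma four_eq0: "(4::4) = 0" by simp

lemma UNIV_minus0: "UNIV - {0::4} = {1,2,3}"
  using exhaust_4 four_eq0 by auto

lemma sum_spatial: "(\<Sum>i\<in>UNIV - {0::4}. f i) = f 1 + f 2 + f 3"
  by (simp add: UNIV_minus0 add.assoc)

lemma rad_eq: "rad p = sqrt ((p$1)^2 + (p$2)^2 + (p$3)^2)"
  by (simp add: rad_def sum_spatial)

lemma rad_nonneg: "rad p \<ge> 0" by (simp add: rad_eq)

lemma omega_sq: "(omega p 1)^2 + (omega p 2)^2 + (omega p 3)^2 = 1"
proof (cases "rad p = 0")
  case True then show ?thesis by (simp add: omega_def)
next
  case False
  have r2: "(rad p)^2 = (p$1)^2 + (p$2)^2 + (p$3)^2" by (simp add: rad_eq)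
  have "(omega p 1)^2 + (omega p 2)^2 + (omega p 3)^2 = ((p$1)^2 + (p$2)^2 + (p$3)^2) / (rad p)^2"
    using False by (simp add: omega_def power_divide add_divide_distrib)
  then show ?thesis using False r2 by (simp add: rad_eq)
qed

lemma x_eq: "i \<noteq> 0 \<Longrightarrow> p $ i = rad p * omega p i"
proof (cases "rad p = 0")
  case True
  assume i: "i \<noteq> 0"
  have "(p$1)^2 + (p$2)^2 + (p$3)^2 = 0" using True by (simp add: rad_eq)
  then have "p$1 = 0" "p$2 = 0" "p$3 = 0" by (smt (verit) zero_le_power2 power_zero_numeral zero_eq_power2)+
  then show ?thesis using i exhaust_4[of i] four_eq0 True by auto
next
  case False
  assume "i \<noteq> 0"
  then show ?thesis using False by (simp add: omega_def)
qed

lemma omega_bound: "i \<noteq> 0 \<Longrightarrow> \<bar>omega p i\<bar> \<le> 1"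
proof -
  assume i: "i \<noteq> 0"
  have "(omega p i)^2 \<le> 1"
    using omega_sq[of p] exhaust_4[of i] i four_eq0
    by (auto simp: ) (smt (verit) zero_le_power2)+
  then show ?thesis by (simp add: abs_square_le_1)
qed


lemma finite_Zset: "finite Zset"
proof -
  have "{Om a b | a b. a < b} \<subseteq> (\<lambda>(a, b). Om a b) ` UNIV" by auto
  then have "finite {Om a b | a b. a < b}" by (rule finite_subset) simp
  then show ?thesis unfolding Zset_def by simp
qed

lemma Dz_in: "Dz a \<in> Zset" and Sc_in: "Sc \<in> Zset" and Om_in: "a < b \<Longrightarrow> Om a b \<in> Zset"
  unfolding Zset_def by auto

definition Zs :: "(pt \<Rightarrow> real) \<Rightarrow> pt \<Rightarrow> real" where
  "Zs g p = (\<Sum>Z\<in>Zset. \<bar>apZ Z g p\<bar>)"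

lemma Zs_ge: "Z \<in> Zset \<Longrightarrow> \<bar>apZ Z g p\<bar> \<le> Zs g p"
  unfolding Zs_def by (rule member_le_sum) (auto simp: finite_Zset)

lemma Om_bound: "\<bar>apZ (Om a b) g p\<bar> \<le> Zs g p"
proof -
  have nn: "0 \<le> Zs g p" unfolding Zs_def by (simp add: sum_nonneg)
  consider "a < b" | "a = b" | "b < a" by fastforce
  then show ?thesis
  proof cases
    case 1 then show ?thesis by (intro Zs_ge Om_in)
  next
    case 2 then show ?thesis using nn by simp
  next
    case 3
    have "apZ (Om a b) g p = - apZ (Om b a) g p" by simp
    then show ?thesis using Zs_ge[OF Om_in[OF 3], of g p] by (simp only: abs_minus_cancel)
  qed
qed

definition Uv :: "pt \<Rightarrow> 4 \<Rightarrow> real" where "Uv p c = (if c = 0 then 1 else - omega p c)"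
definition lam :: "pt \<Rightarrow> 4 \<Rightarrow> real" where "lam p a = (if a = 0 then 1/2 else omega p a / 2)"
definition kap :: "pt \<Rightarrow> 4 \<Rightarrow> real" where "kap p a = (if a = 0 then 1/2 else - omega p a / 2)"
definition tau :: "pt \<Rightarrow> 4 \<Rightarrow> 4 \<Rightarrow> real" where
  "tau p a c = (if a = 0 \<or> c = 0 then 0 else (if a = c then 1 else 0) - omega p a * omega p c)"

lemma Lvec_nth: "Lvec p $ c = (if c = 0 then 1 else omega p c)" by (simp add: Lvec_def)

lemma dec: "lam p a * Lvec p $ c + kap p a * Uv p c + tau p a c = (if a = c then 1 else 0)"
  by (auto simp: lam_def kap_def tau_def Uv_def Lvec_nth algebra_simps)

lemma kap_eq: "kap p a = - (mdiag a * Lvec p $ a) / 2"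
  by (simp add: kap_def mdiag_def Lvec_nth)

lemma bounds1: "\<bar>Lvec p $ c\<bar> \<le> 1" "\<bar>Uv p c\<bar> \<le> 1" "\<bar>lam p a\<bar> \<le> 1" "\<bar>kap p a\<bar> \<le> 1"
proof -
  show "\<bar>Lvec p $ c\<bar> \<le> 1" "\<bar>Uv p c\<bar> \<le> 1"
    by (cases "c = 0"; simp add: Lvec_nth Uv_def omega_bound)+
  show "\<bar>lam p a\<bar> \<le> 1" "\<bar>kap p a\<bar> \<le> 1"
    by (cases "a = 0"; use omega_bound[of a p] in \<open>simp add: lam_def kap_def\<close>)+
qed

lemma tau_bound: "\<bar>tau p a c\<bar> \<le> 1"
proof (cases "a = 0 \<or> c = 0")
  case True then show ?thesis by (simp add: tau_def)
next
  case False
  have wa: "\<bar>omega p a\<bar> \<le> 1" and wc: "\<bar>omega p c\<bar> \<le> 1" using omega_bound False by auto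
  have p: "\<bar>omega p a * omega p c\<bar> \<le> 1" using abm[OF wa wc] by simp
  have sq: "omega p a * omega p a \<le> 1" using abm[OF wa wa] by simp
  have "0 \<le> omega p a * omega p a" by simp
  then show ?thesis using p sq False by (auto simp: tau_def abs_le_iff)
qed

lemma tau_perp: "tau p a 1 * omega p 1 + tau p a 2 * omega p 2 + tau p a 3 * omega p 3 = 0"
proof (cases "a = 0")
  case True then show ?thesis by (simp add: tau_def)
next
  case False
  have sq: "(omega p 1)^2 + (omega p 2)^2 + (omega p 3)^2 = 1" by (rule omega_sq)
  have "a = 1 \<or> a = 2 \<or> a = 3" using False exhaust_4[of a] four_eq0 by auto
  then show ?thesis
  proof (elim disjE)
    assume a: "a = 1"
    have "tau p a 1 = (if a = 1 then 1 else 0) - omega p a * omega p 1" "tau p a 2 = (if a = 2 then 1 else 0) - omega p a * omega p 2"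
      "tau p a 3 = (if a = 3 then 1 else 0) - omega p a * omega p 3" using a by (simp_all add: tau_def)
    note tt = this
    have "tau p a 1 * omega p 1 + tau p a 2 * omega p 2 + tau p a 3 * omega p 3
      = omega p a - omega p a * ((omega p 1)^2 + (omega p 2)^2 + (omega p 3)^2)"
      unfolding tt using a by (simp add: algebra_simps power2_eq_square)
    then show ?thesis using sq by simp
  next
    assume a: "a = 2"
    have "tau p a 1 = (if a = 1 then 1 else 0) - omega p a * omega p 1" "tau p a 2 = (if a = 2 then 1 else 0) - omega p a * omega p 2"
      "tau p a 3 = (if a = 3 then 1 else 0) - omega p a * omega p 3" using a by (simp_all add: tau_def)
    note tt = this
    have "tau p a 1 * omega p 1 + tau p a 2 * omega p 2 + tau p a 3 * omega p 3
      = omega p a - omega p a * ((omega p 1)^2 + (omega p 2)^2 + (omega p 3)^2)"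
      unfolding tt using a by (simp add: algebra_simps power2_eq_square)
    then show ?thesis using sq by simp
  next
    assume a: "a = 3"
    have "tau p a 1 = (if a = 1 then 1 else 0) - omega p a * omega p 1" "tau p a 2 = (if a = 2 then 1 else 0) - omega p a * omega p 2"
      "tau p a 3 = (if a = 3 then 1 else 0) - omega p a * omega p 3" using a by (simp_all add: tau_def)
    note tt = this
    have "tau p a 1 * omega p 1 + tau p a 2 * omega p 2 + tau p a 3 * omega p 3
      = omega p a - omega p a * ((omega p 1)^2 + (omega p 2)^2 + (omega p 3)^2)"
      unfolding tt using a by (simp add: algebra_simps power2_eq_square)
    then show ?thesis using sq by simp
  qed
qed


lemma vf_est:
  assumes t0: "tcoord p \<ge> 0"
  shows "(1 + tcoord p + \<bar>qcoord p\<bar>) * \<bar>\<Sum>c\<in>UNIV. Lvec p $ c * pd c g p\<bar> \<le> 12 * Zs g p"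
    and "(1 + tcoord p + \<bar>qcoord p\<bar>) * \<bar>\<Sum>c\<in>UNIV. tau p a c * pd c g p\<bar> \<le> 21 * Zs g p"
    and "(1 + \<bar>qcoord p\<bar>) * \<bar>pd c g p\<bar> \<le> 40 * Zs g p"
proof -
  let ?t = "p$0" and ?r = "rad p" and ?M = "Zs g p"
  have xi: "p$1 = ?r * omega p 1" "p$2 = ?r * omega p 2" "p$3 = ?r * omega p 3" by (simp_all add: x_eq)
  have bD: "\<bar>pd c g p\<bar> \<le> ?M" for c using Zs_ge[OF Dz_in, of c g p] by simp
  have bS': "\<bar>apZ Sc g p\<bar> \<le> ?M" by (rule Zs_ge[OF Sc_in])
  have eS: "apZ Sc g p = ?t * pd 0 g p + ?r * omega p 1 * pd 1 g p + ?r * omega p 2 * pd 2 g p + ?r * omega p 3 * pd 3 g p"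
    by (simp add: sum_UNIV4 xi)
  have eO: "apZ (Om 0 i) g p = - ?t * pd i g p - p$i * pd 0 g p" if "i \<noteq> 0" for i
    using that by (simp add: xlow_def mdiag_def)
  have eO2: "apZ (Om i j) g p = p$i * pd j g p - p$j * pd i g p" if "i \<noteq> 0" "j \<noteq> 0" for i j
    using that by (simp add: xlow_def mdiag_def)
  interpret V: vfb ?t ?r "omega p 1" "omega p 2" "omega p 3" "pd 0 g p" "pd 1 g p" "pd 2 g p" "pd 3 g p" ?M
  proof
    show "0 \<le> ?t" using t0 by (simp add: tcoord_def)
    show "0 \<le> ?r" by (rule rad_nonneg)
    show "(omega p 1)\<^sup>2 + (omega p 2)\<^sup>2 + (omega p 3)\<^sup>2 = 1" by (rule omega_sq)
    show "\<bar>pd 0 g p\<bar> \<le> ?M" "\<bar>pd 1 g p\<bar> \<le> ?M" "\<bar>pd 2 g p\<bar> \<le> ?M" "\<bar>pd 3 g p\<bar> \<le> ?M" by (rule bD)+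
    show "\<bar>?t * pd 0 g p + ?r * omega p 1 * pd 1 g p + ?r * omega p 2 * pd 2 g p + ?r * omega p 3 * pd 3 g p\<bar> \<le> ?M"
      using bS' eS by simp
    show "\<bar>- ?t * pd 1 g p - ?r * omega p 1 * pd 0 g p\<bar> \<le> ?M"
      using Om_bound[of 0 1 g p] eO[of 1] xi by simp
    show "\<bar>- ?t * pd 2 g p - ?r * omega p 2 * pd 0 g p\<bar> \<le> ?M"
      using Om_bound[of 0 2 g p] eO[of 2] xi by simp
    show "\<bar>- ?t * pd 3 g p - ?r * omega p 3 * pd 0 g p\<bar> \<le> ?M"
      using Om_bound[of 0 3 g p] eO[of 3] xi by simp
    show "\<bar>?r * omega p 1 * pd 2 g p - ?r * omega p 2 * pd 1 g p\<bar> \<le> ?M"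
      using Om_bound[of 1 2 g p] eO2[of 1 2] xi by (simp add: mult.assoc)
    show "\<bar>?r * omega p 1 * pd 3 g p - ?r * omega p 3 * pd 1 g p\<bar> \<le> ?M"
      using Om_bound[of 1 3 g p] eO2[of 1 3] xi by (simp add: mult.assoc)
    show "\<bar>?r * omega p 2 * pd 3 g p - ?r * omega p 3 * pd 2 g p\<bar> \<le> ?M"
      using Om_bound[of 2 3 g p] eO2[of 2 3] xi by (simp add: mult.assoc)
  qed
  have q: "1 + tcoord p + \<bar>qcoord p\<bar> = 1 + ?t + \<bar>?r - ?t\<bar>" "1 + \<bar>qcoord p\<bar> = 1 + \<bar>?r - ?t\<bar>"
    by (simp_all add: qcoord_def tcoord_def)
  have sL: "(\<Sum>c\<in>UNIV. Lvec p $ c * pd c g p) = pd 0 g p + omega p 1 * pd 1 g p + omega p 2 * pd 2 g p + omega p 3 * pd 3 g p"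
    by (simp add: sum_UNIV4 Lvec_nth)
  show "(1 + tcoord p + \<bar>qcoord p\<bar>) * \<bar>\<Sum>c\<in>UNIV. Lvec p $ c * pd c g p\<bar> \<le> 12 * Zs g p"
    unfolding q sL using V.Lbound by (simp add: add.assoc)
  have sT: "(\<Sum>c\<in>UNIV. tau p a c * pd c g p) = tau p a 1 * pd 1 g p + tau p a 2 * pd 2 g p + tau p a 3 * pd 3 g p" for a
    by (simp add: sum_UNIV4 tau_def)
  have tb: "\<bar>tau p a 1\<bar> \<le> 1" "\<bar>tau p a 2\<bar> \<le> 1" "\<bar>tau p a 3\<bar> \<le> 1" for a by (rule tau_bound)+
  show "(1 + tcoord p + \<bar>qcoord p\<bar>) * \<bar>\<Sum>c\<in>UNIV. tau p a c * pd c g p\<bar> \<le> 21 * Zs g p"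
    unfolding q sT using V.Tbound[OF tb tau_perp] by simp
  have ei: "pd i g p = omega p i * (omega p 1 * pd 1 g p + omega p 2 * pd 2 g p + omega p 3 * pd 3 g p)
     + (tau p i 1 * pd 1 g p + tau p i 2 * pd 2 g p + tau p i 3 * pd 3 g p)" if "i \<noteq> 0" for i
  proof -
    have "i = 1 \<or> i = 2 \<or> i = 3" using that exhaust_4[of i] four_eq0 by auto
    then show ?thesis by (auto simp: tau_def algebra_simps)
  qed
  have "(1 + \<bar>?r - ?t\<bar>) * \<bar>pd c g p\<bar> \<le> 40 * ?M"
  proof (cases "c = 0")
    case True then show ?thesis using V.G0 by simp
  next
    case False
    show ?thesis by (rule V.Gi_gen[OF tb tau_perp omega_bound[OF False] bD ei[OF False]])
  qed
  then show "(1 + \<bar>qcoord p\<bar>) * \<bar>pd c g p\<bar> \<le> 40 * Zs g p" unfolding q .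
qed


lemma sum_abs_le_bound: fixes f :: "4 \<Rightarrow> real"
  assumes "\<And>c. \<bar>f c\<bar> \<le> B c" shows "\<bar>\<Sum>c\<in>UNIV. f c\<bar> \<le> (\<Sum>c\<in>UNIV. B c)"
  by (rule order_trans[OF sum_abs sum_mono]) (use assms in auto)

lemma abs_mul_le1: fixes x y B :: real shows "\<bar>x\<bar> \<le> 1 \<Longrightarrow> \<bar>y\<bar> \<le> B \<Longrightarrow> \<bar>x * y\<bar> \<le> B"
  by (rule abm)

lemma Dop_decomp:
  fixes p :: pt and \<psi> :: "pt \<Rightarrow> real"
  assumes s: "smooth \<psi>"
  defines "A \<equiv> \<lambda>a b. pd a (pd b \<psi>) p"
  defines "LA \<equiv> \<lambda>b. \<Sum>c\<in>UNIV. Lvec p $ c * A c b"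
  defines "UA \<equiv> \<lambda>b. \<Sum>c\<in>UNIV. Uv p c * A c b"
  defines "TA \<equiv> \<lambda>a b. \<Sum>c\<in>UNIV. tau p a c * A c b"
  defines "LUA \<equiv> \<Sum>c\<in>UNIV. Uv p c * LA c"
  defines "UUA \<equiv> \<Sum>c\<in>UNIV. Uv p c * UA c"
  defines "TUA \<equiv> \<lambda>b. \<Sum>c\<in>UNIV. Uv p c * TA b c"
  shows "A a b = lam p a * LA b + TA a b + kap p a * (lam p b * LUA + TUA b) + kap p a * kap p b * UUA"
proof -
  have sym: "A a b = A b a" for a b unfolding A_def using schwarz_smooth[OF s] by metis
  have s1: "A a b = lam p a * LA b + kap p a * UA b + TA a b" for a b
  proof -
    have "(\<Sum>c\<in>UNIV. (lam p a * Lvec p $ c + kap p a * Uv p c + tau p a c) * A c b) = A a b"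
      unfolding dec by (simp add: mif2 sum.delta)
    moreover have "(\<Sum>c\<in>UNIV. (lam p a * Lvec p $ c + kap p a * Uv p c + tau p a c) * A c b)
       = lam p a * LA b + kap p a * UA b + TA a b"
      unfolding LA_def UA_def TA_def by (simp add: distrib_right sum.distrib sum_distrib_left mult.assoc)
    ultimately show ?thesis by simp
  qed
  have s2: "UA b = lam p b * LUA + kap p b * UUA + TUA b"
  proof -
    have "UA b = (\<Sum>c\<in>UNIV. Uv p c * A b c)" unfolding UA_def using sym by simp
    also have "\<dots> = (\<Sum>c\<in>UNIV. Uv p c * (lam p b * LA c + kap p b * UA c + TA b c))"
      using s1 by simp
    also have "\<dots> = lam p b * LUA + kap p b * UUA + TUA b"
      unfolding LUA_def UUA_def TUA_def by (simp add: distrib_left sum.distrib sum_distrib_left mult.left_commute)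
    finally show ?thesis .
  qed
  show ?thesis using s1[of a b] s2 by (simp add: algebra_simps)
qed


lemma Zs_nonneg: "0 \<le> Zs g p" unfolding Zs_def by (simp add: sum_nonneg)

lemma div_bound: fixes W x K :: real shows "W \<ge> 1 \<Longrightarrow> W * \<bar>x\<bar> \<le> K \<Longrightarrow> \<bar>x\<bar> \<le> K / W"
  by (simp add: pos_le_divide_eq mult.commute)

lemma Dop_bound:
  fixes p :: pt and \<psi> :: "pt \<Rightarrow> real" and Q :: "4 \<Rightarrow> 4 \<Rightarrow> pt \<Rightarrow> real"
  assumes s: "smooth \<psi>" and t0: "tcoord p \<ge> 0"
  shows "\<bar>Dop Q \<psi> p\<bar> \<le> (66 * tnorm Q p / (1 + tcoord p + \<bar>qcoord p\<bar>) + 40 * normLL Q p / (1 + \<bar>qcoord p\<bar>))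
            * (\<Sum>c\<in>UNIV. Zs (pd c \<psi>) p)"
proof -
  define W1 where "W1 = 1 + tcoord p + \<bar>qcoord p\<bar>"
  define W2 where "W2 = 1 + \<bar>qcoord p\<bar>"
  define M where "M = (\<lambda>c. Zs (pd c \<psi>) p)"
  define SM where "SM = (\<Sum>c\<in>UNIV. M c)"
  define A where "A = (\<lambda>a b. pd a (pd b \<psi>) p)"
  define LA where "LA = (\<lambda>b. \<Sum>c\<in>UNIV. Lvec p $ c * A c b)"
  define UA where "UA = (\<lambda>b. \<Sum>c\<in>UNIV. Uv p c * A c b)"
  define TA where "TA = (\<lambda>a b. \<Sum>c\<in>UNIV. tau p a c * A c b)"
  define LUA where "LUA = (\<Sum>c\<in>UNIV. Uv p c * LA c)"
  define UUA where "UUA = (\<Sum>c\<in>UNIV. Uv p c * UA c)"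
  define TUA where "TUA = (\<lambda>b. \<Sum>c\<in>UNIV. Uv p c * TA b c)"
  have dec: "A a b = lam p a * LA b + TA a b + kap p a * (lam p b * LUA + TUA b) + kap p a * kap p b * UUA" for a b
    unfolding A_def LA_def UA_def TA_def LUA_def UUA_def TUA_def by (rule Dop_decomp[OF s])
  have W1: "W1 \<ge> 1" unfolding W1_def using t0 by simp
  have W2: "W2 \<ge> 1" unfolding W2_def by simp
  have Mn: "0 \<le> M c" for c unfolding M_def by (rule Zs_nonneg)
  have MS: "M c \<le> SM" for c unfolding SM_def by (rule member_le_sum) (auto simp: Mn)
  have SMn: "0 \<le> SM" unfolding SM_def by (simp add: sum_nonneg Mn)
  have bLA: "\<bar>LA b\<bar> \<le> 12 * M b / W1" for b
  proof -
    have "W1 * \<bar>LA b\<bar> \<le> 12 * M b" unfolding W1_def LA_def A_def M_def by (rule vf_est(1)[OF t0])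
    then show ?thesis by (rule div_bound[OF W1])
  qed
  have bTA: "\<bar>TA a b\<bar> \<le> 21 * M b / W1" for a b
  proof -
    have "W1 * \<bar>TA a b\<bar> \<le> 21 * M b" unfolding W1_def TA_def A_def M_def by (rule vf_est(2)[OF t0])
    then show ?thesis by (rule div_bound[OF W1])
  qed
  have bA: "\<bar>A d c\<bar> \<le> 40 * M c / W2" for c d
  proof -
    have "W2 * \<bar>A d c\<bar> \<le> 40 * M c" unfolding W2_def A_def M_def by (rule vf_est(3)[OF t0])
    then show ?thesis by (rule div_bound[OF W2])
  qed
  have bLUA: "\<bar>LUA\<bar> \<le> 12 * SM / W1"
  proof -
    have "\<bar>LUA\<bar> \<le> (\<Sum>c\<in>UNIV. 12 * M c / W1)" unfolding LUA_def
      by (rule sum_abs_le_bound) (rule abm[OF bounds1(2) bLA])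
    also have "\<dots> = 12 * SM / W1" unfolding SM_def by (simp add: sum_divide_distrib sum_distrib_left)
    finally show ?thesis .
  qed
  have bTUA: "\<bar>TUA b\<bar> \<le> 21 * SM / W1" for b
  proof -
    have "\<bar>TUA b\<bar> \<le> (\<Sum>c\<in>UNIV. 21 * M c / W1)" unfolding TUA_def
      by (rule sum_abs_le_bound) (rule abm[OF bounds1(2) bTA])
    also have "\<dots> = 21 * SM / W1" unfolding SM_def by (simp add: sum_divide_distrib sum_distrib_left)
    finally show ?thesis .
  qed
  have bUA: "\<bar>UA c\<bar> \<le> 160 * M c / W2" for c
  proof -
    have "\<bar>UA c\<bar> \<le> (\<Sum>d::4\<in>UNIV. 40 * M c / W2)" unfolding UA_def
      by (rule sum_abs_le_bound[where B="\<lambda>d. 40 * M c / W2"]) (rule abm[OF bounds1(2) bA])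
    then show ?thesis by simp
  qed
  have bUUA: "\<bar>UUA\<bar> \<le> 160 * SM / W2"
  proof -
    have "\<bar>UUA\<bar> \<le> (\<Sum>c\<in>UNIV. 160 * M c / W2)" unfolding UUA_def
      by (rule sum_abs_le_bound) (rule abm[OF bounds1(2) bUA])
    also have "\<dots> = 160 * SM / W2" unfolding SM_def by (simp add: sum_divide_distrib sum_distrib_left)
    finally show ?thesis .
  qed
  define Br where "Br = (\<lambda>a b. lam p a * LA b + TA a b + kap p a * (lam p b * LUA + TUA b))"
  have bBr: "\<bar>Br a b\<bar> \<le> 66 * SM / W1" for a b
  proof -
    have W1p: "W1 > 0" using W1 by simp
    have "M b / W1 \<le> SM / W1" using MS W1p by (simp add: divide_right_mono)
    then have a1: "\<bar>LA b\<bar> \<le> 12 * SM / W1" "\<bar>TA a b\<bar> \<le> 21 * SM / W1"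
      using bLA[of b] bTA[of a b] by auto
    have a2: "\<bar>lam p a * LA b\<bar> \<le> 12 * SM / W1" by (rule abm[OF bounds1(3) a1(1)])
    have a3: "\<bar>lam p b * LUA\<bar> \<le> 12 * SM / W1" by (rule abm[OF bounds1(3) bLUA])
    have a4: "\<bar>kap p a * (lam p b * LUA + TUA b)\<bar> \<le> 33 * SM / W1"
      by (rule abm[OF bounds1(4)]) (use a3 bTUA[of b] in \<open>simp add: add_divide_distrib[symmetric]\<close>)
    show ?thesis unfolding Br_def using a1(2) a2 a4 by (simp add: add_divide_distrib[symmetric])
  qed
  have kk: "(\<Sum>a\<in>UNIV. \<Sum>b\<in>UNIV. Q a b p * (kap p a * kap p b)) = contr Q p (Lvec p) (Lvec p) / 4"
    unfolding contr_def kap_eq by (simp add: sum_divide_distrib algebra_simps)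
  have "Dop Q \<psi> p = (\<Sum>a\<in>UNIV. \<Sum>b\<in>UNIV. Q a b p * Br a b) + UUA * (contr Q p (Lvec p) (Lvec p) / 4)"
  proof -
    have "Dop Q \<psi> p = (\<Sum>a\<in>UNIV. \<Sum>b\<in>UNIV. Q a b p * A a b)" by (simp add: Dop_def A_def)
    also have "\<dots> = (\<Sum>a\<in>UNIV. \<Sum>b\<in>UNIV. Q a b p * Br a b + UUA * (Q a b p * (kap p a * kap p b)))"
      unfolding dec Br_def by (simp add: algebra_simps)
    also have "\<dots> = (\<Sum>a\<in>UNIV. \<Sum>b\<in>UNIV. Q a b p * Br a b) + UUA * (\<Sum>a\<in>UNIV. \<Sum>b\<in>UNIV. Q a b p * (kap p a * kap p b))"
      by (simp add: sum.distrib sum_distrib_left)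
    finally show ?thesis unfolding kk .
  qed
  moreover have "\<bar>\<Sum>a\<in>UNIV. \<Sum>b\<in>UNIV. Q a b p * Br a b\<bar> \<le> tnorm Q p * (66 * SM / W1)"
  proof -
    have "\<bar>\<Sum>a\<in>UNIV. \<Sum>b\<in>UNIV. Q a b p * Br a b\<bar> \<le> (\<Sum>a\<in>UNIV. \<Sum>b\<in>UNIV. \<bar>Q a b p\<bar> * (66 * SM / W1))"
      by (intro sum_abs_le_bound) (metis abs_ge_zero abs_mult bBr mult_left_mono)
    also have "\<dots> = tnorm Q p * (66 * SM / W1)"
      by (simp only: tnorm_def sum_distrib_right)
    finally show ?thesis .
  qed
  moreover have "\<bar>UUA * (contr Q p (Lvec p) (Lvec p) / 4)\<bar> \<le> (160 * SM / W2) * (normLL Q p / 4)"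
    unfolding normLL_def abs_mult using bUUA by (intro mult_mono) auto
  ultimately have "\<bar>Dop Q \<psi> p\<bar> \<le> tnorm Q p * (66 * SM / W1) + (160 * SM / W2) * (normLL Q p / 4)"
    by (smt (verit))
  also have "\<dots> = (66 * tnorm Q p / W1 + 40 * normLL Q p / W2) * SM"
    by (simp add: algebra_simps)
  finally show ?thesis unfolding W1_def W2_def SM_def M_def .
qed


lemma pd_le_grad: "\<bar>pd c f p\<bar> \<le> gradnorm f p"
  unfolding gradnorm_def by (rule member_le_sum) auto

lemma comm_bound: "\<bar>comm Z c \<psi> p\<bar> \<le> 2 * gradnorm \<psi> p"
proof (cases Z)
  case (Om a b)
  have g: "0 \<le> gradnorm \<psi> p" unfolding gradnorm_def by (simp add: sum_nonneg)
  have "\<bar>comm Z c \<psi> p\<bar> \<le> \<bar>pd b \<psi> p\<bar> + \<bar>pd a \<psi> p\<bar>"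
    using Om by (auto simp: mdiag_def abs_mult)
  then show ?thesis using pd_le_grad[of b \<psi> p] pd_le_grad[of a \<psi> p] by linarith
next
  case Sc then show ?thesis using pd_le_grad[of c \<psi> p] unfolding gradnorm_def
    by (simp add: sum_nonneg)
next
  case (Dz x) then show ?thesis unfolding gradnorm_def by (simp add: sum_nonneg)
qed

definition GZ :: "(pt \<Rightarrow> real) \<Rightarrow> pt \<Rightarrow> real" where
  "GZ \<psi> p = gradnorm \<psi> p + (\<Sum>Z\<in>Zset. gradnorm (apZ Z \<psi>) p)"

lemma SM_bound:
  assumes s: "smooth \<psi>"
  shows "(\<Sum>c\<in>UNIV. Zs (pd c \<psi>) p) \<le> (1 + 8 * real (card Zset)) * GZ \<psi> p"
proof -
  have e: "apZ Z (pd c \<psi>) p = pd c (apZ Z \<psi>) p - comm Z c \<psi> p" for Z c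
    using pd_apZ[OF s, of c Z] by (simp add: fun_eq_iff)
  have "(\<Sum>c\<in>UNIV. Zs (pd c \<psi>) p) \<le> (\<Sum>c\<in>UNIV. \<Sum>Z\<in>Zset. \<bar>pd c (apZ Z \<psi>) p\<bar> + 2 * gradnorm \<psi> p)"
    unfolding Zs_def e
    by (intro sum_mono) (smt (verit) abs_triangle_ineq4 comm_bound)
  also have "\<dots> = (\<Sum>Z\<in>Zset. gradnorm (apZ Z \<psi>) p) + 8 * real (card Zset) * gradnorm \<psi> p"
    by (simp add: sum.distrib sum.swap[of _ UNIV Zset] gradnorm_def)
  also have "\<dots> \<le> (1 + 8 * real (card Zset)) * GZ \<psi> p"
  proof -
    have g: "0 \<le> gradnorm \<psi> p" unfolding gradnorm_def by (simp add: sum_nonneg)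
    have h: "0 \<le> (\<Sum>Z\<in>Zset. gradnorm (apZ Z \<psi>) p)" unfolding gradnorm_def by (simp add: sum_nonneg)
    have "(\<Sum>Z\<in>Zset. gradnorm (apZ Z \<psi>) p) + 8 * real (card Zset) * gradnorm \<psi> p
       \<le> (1 + 8 * real (card Zset)) * (\<Sum>Z\<in>Zset. gradnorm (apZ Z \<psi>) p) + (1 + 8 * real (card Zset)) * gradnorm \<psi> p"
      using g h by (intro add_mono) (auto simp: algebra_simps)
    then show ?thesis by (simp add: GZ_def algebra_simps)
  qed
  finally show ?thesis .
qed


lemma inner4: "inner (x::pt) y = x$0 * y$0 + x$1 * y$1 + x$2 * y$2 + x$3 * y$3"
  by (simp add: inner_vec_def sum_UNIV4)

lemma frame_complete:
  assumes fr: "sframe S1 S2" and s0: "s $ 0 = 0" and sL: "inner s (Lvec p) = 0"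
  shows "s = inner s (S1 p) *\<^sub>R S1 p + inner s (S2 p) *\<^sub>R S2 p"
proof -
  define e0 :: pt where "e0 = axis 0 1"
  define n where "n = Lvec p - e0"
  define a where "a = S1 p"
  define b where "b = S2 p"
  have fa: "a $ 0 = 0" "norm a = 1" "inner a (Lvec p) = 0" and fb: "b $ 0 = 0" "norm b = 1" "inner b (Lvec p) = 0"
    and ab: "inner a b = 0"
    using fr unfolding sframe_def a_def b_def by auto
  have n0: "n $ 0 = 0" unfolding n_def e0_def by (simp add: Lvec_nth axis_def)
  have nn: "inner n n = 1"
    using omega_sq[of p] unfolding n_def e0_def inner4
    by (simp add: Lvec_nth axis_def four_distinct power2_eq_square)
  have ie: "inner e0 x = x $ 0" for x unfolding e0_def by (simp add: inner_axis')
  have ine: "inner x n = inner x (Lvec p) - x $ 0" for x unfolding n_def by (simp add: inner_diff_right inner_commute ie)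
  have o1: "inner e0 n = 0" "inner e0 a = 0" "inner e0 b = 0" "inner n a = 0" "inner n b = 0"
  proof -
    show "inner e0 n = 0" "inner e0 a = 0" "inner e0 b = 0" by (simp_all only: ie n0 fa fb)
    have "inner a n = 0" "inner b n = 0" by (simp_all only: ine fa fb)
    then show "inner n a = 0" "inner n b = 0" by (simp_all add: inner_commute)
  qed
  have nz: "e0 \<noteq> 0" "n \<noteq> 0" "a \<noteq> 0" "b \<noteq> 0"
    using nn fa fb by (auto simp: e0_def)
  define B where "B = {e0, n, a, b}"
  have dist: "e0 \<noteq> n" "e0 \<noteq> a" "e0 \<noteq> b" "n \<noteq> a" "n \<noteq> b" "a \<noteq> b"
    using o1 ab nz by (metis inner_eq_zero_iff)+
  have po: "pairwise orthogonal B"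
    unfolding B_def pairwise_def orthogonal_def using o1 ab by (auto simp: inner_commute)
  have ind: "independent B" using pairwise_orthogonal_independent[OF po] nz unfolding B_def by auto
  have cB: "card B = 4" unfolding B_def using dist by simp
  have "UNIV \<subseteq> span B"
    by (rule card_ge_dim_independent[OF _ ind]) (simp_all add: cB)
  define w where "w = s - inner s a *\<^sub>R a - inner s b *\<^sub>R b"
  have aa: "inner a a = 1" "inner b b = 1" using fa fb by (simp_all add: norm_eq_1)
  have "orthogonal w y" if "y \<in> B" for y
  proof -
    have "inner w e0 = 0" unfolding w_def using s0 fa fb by (simp add: inner_diff_left inner_commute ie)
    moreover have "inner w n = 0" unfolding w_def using s0 sL fa fb by (simp add: inner_diff_left ine)
    moreover have "inner w a = 0" unfolding w_def using aa ab by (simp add: inner_diff_left inner_diff_right inner_commute)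
    moreover have "inner w b = 0" unfolding w_def using aa ab by (simp add: inner_diff_left inner_diff_right inner_commute)
    ultimately show ?thesis using that unfolding B_def orthogonal_def by auto
  qed
  then have "orthogonal w w" using orthogonal_to_span \<open>UNIV \<subseteq> span B\<close> by blast
  then have "w = 0" by (simp add: orthogonal_self)
  then show ?thesis unfolding w_def a_def b_def by (simp add: algebra_simps)
qed


lemma row_le: "(\<Sum>b\<in>UNIV. \<bar>P d b p\<bar>) \<le> tnorm P p"
  unfolding tnorm_def by (rule member_le_sum[where f="\<lambda>a. \<Sum>b\<in>UNIV. \<bar>P a b p\<bar>"]) (auto simp: sum_nonneg)

lemma col_le: "(\<Sum>a\<in>UNIV. \<bar>P a d p\<bar>) \<le> tnorm P p"
  unfolding tnorm_def by (rule sum_mono, rule member_le_sum) auto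

lemma tnorm_nonneg: "0 \<le> tnorm P p" unfolding tnorm_def by (simp add: sum_nonneg)

lemma mdiag_abs: "\<bar>mdiag a\<bar> = 1" by (simp add: mdiag_def)

lemma tnorm_AZ: "tnorm (AZ Z P) p \<le> 4 * tnorm P p"
proof (cases Z)
  case (Om c d)
  have pt: "\<bar>AZ Z P a b p\<bar> \<le> (if a = c then \<bar>P d b p\<bar> else 0) + (if b = c then \<bar>P a d p\<bar> else 0)
     + (if a = d then \<bar>P c b p\<bar> else 0) + (if b = d then \<bar>P a c p\<bar> else 0)" for a b
  proof -
    define X where "X = (if a = c then P d b p else 0) + (if b = c then P a d p else 0)"
    define Y where "Y = (if a = d then P c b p else 0) + (if b = d then P a c p else 0)"
    have "AZ Z P a b p = mdiag d * X - mdiag c * Y" using Om by (simp add: X_def Y_def)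
    also have "\<bar>\<dots>\<bar> \<le> \<bar>mdiag d * X\<bar> + \<bar>mdiag c * Y\<bar>" by (rule abs_triangle_ineq4)
    also have "\<dots> = \<bar>X\<bar> + \<bar>Y\<bar>" by (simp add: abs_mult mdiag_abs)
    finally have "\<bar>AZ Z P a b p\<bar> \<le> \<bar>(if a = c then P d b p else 0) + (if b = c then P a d p else 0)\<bar>
        + \<bar>(if a = d then P c b p else 0) + (if b = d then P a c p else 0)\<bar>" unfolding X_def Y_def .
    also have "\<dots> \<le> ((if a = c then \<bar>P d b p\<bar> else 0) + (if b = c then \<bar>P a d p\<bar> else 0))
        + ((if a = d then \<bar>P c b p\<bar> else 0) + (if b = d then \<bar>P a c p\<bar> else 0))"
      by (intro add_mono) (auto intro: order_trans[OF abs_triangle_ineq])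
    finally show ?thesis by simp
  qed
  have "tnorm (AZ Z P) p \<le> (\<Sum>a\<in>UNIV. \<Sum>b\<in>UNIV. (if a = c then \<bar>P d b p\<bar> else 0) + (if b = c then \<bar>P a d p\<bar> else 0)
     + (if a = d then \<bar>P c b p\<bar> else 0) + (if b = d then \<bar>P a c p\<bar> else 0))"
    unfolding tnorm_def by (intro sum_mono pt)
  also have "\<dots> = (\<Sum>b\<in>UNIV. \<bar>P d b p\<bar>) + (\<Sum>a\<in>UNIV. \<bar>P a d p\<bar>) + (\<Sum>b\<in>UNIV. \<bar>P c b p\<bar>) + (\<Sum>a\<in>UNIV. \<bar>P a c p\<bar>)"
    by (simp add: sum.distrib sum_if_out sum.delta sum.delta')
  also have "\<dots> \<le> 4 * tnorm P p" using row_le[of P d p] col_le[of P d p] row_le[of P c p] col_le[of P c p] by linarith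
  finally show ?thesis .
qed (auto simp: tnorm_def tnorm_nonneg[of P p, unfolded tnorm_def])

lemma tnorm_Acomp: "tnorm (Acomp As P) p \<le> 4 ^ length As * tnorm P p"
proof (induction As)
  case Nil then show ?case by simp
next
  case (Cons Z As)
  have "tnorm (Acomp (Z # As) P) p \<le> 4 * tnorm (Acomp As P) p" by (simp add: tnorm_AZ)
  also have "\<dots> \<le> 4 * (4 ^ length As * tnorm P p)" using Cons by simp
  finally show ?case by simp
qed

lemma normLL_le: "normLL P p \<le> tnorm P p"
proof -
  have "normLL P p \<le> (\<Sum>a\<in>UNIV. \<Sum>b\<in>UNIV. \<bar>P a b p\<bar>)"
    unfolding normLL_def contr_def
  proof (intro order_trans[OF sum_abs] sum_mono order_trans[OF sum_abs])
    fix a b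
    have "\<bar>mdiag a * mdiag b * P a b p * Lvec p $ a * Lvec p $ b\<bar> = \<bar>P a b p\<bar> * (\<bar>Lvec p $ a\<bar> * \<bar>Lvec p $ b\<bar>)"
      by (simp add: abs_mult mdiag_abs)
    also have "\<dots> \<le> \<bar>P a b p\<bar> * 1"
      using bounds1(1)[of p a] bounds1(1)[of p b] by (intro mult_left_mono) (auto intro: mult_le_one)
    finally show "\<bar>mdiag a * mdiag b * P a b p * Lvec p $ a * Lvec p $ b\<bar> \<le> \<bar>P a b p\<bar>" by simp
  qed
  then show ?thesis unfolding tnorm_def .
qed

lemma contr_add_right: "contr P p X (Y + W) = contr P p X Y + contr P p X W"
  by (simp add: contr_def algebra_simps sum.distrib)
lemma contr_diff_right: "contr P p X (Y - W) = contr P p X Y - contr P p X W"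
  by (simp add: contr_def algebra_simps sum_subtractf)
lemma contr_scale_right: "contr P p X (k *\<^sub>R Y) = k * contr P p X Y"
  by (simp add: contr_def algebra_simps sum_distrib_left)


lemma contr_AZ_Om:
  assumes sym: "\<And>a b. Q a b p = Q b a p"
  shows "contr (AZ (Om c d) Q) p X X = 2 * contr Q p X ((mdiag c * X$c) *\<^sub>R axis d 1 - (mdiag d * X$d) *\<^sub>R axis c 1)"
proof -
  define Y where "Y = (\<lambda>x. \<Sum>a\<in>UNIV. mdiag a * Q a x p * X $ a)"
  have Y': "(\<Sum>b\<in>UNIV. mdiag b * Q x b p * X $ b) = Y x" for x
    unfolding Y_def using sym by simp
  have "contr (AZ (Om c d) Q) p X X = mdiag d * mdiag c * X$c * (\<Sum>b\<in>UNIV. mdiag b * Q d b p * X $ b)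
      + mdiag d * mdiag c * X$c * Y d - mdiag c * mdiag d * X$d * (\<Sum>b\<in>UNIV. mdiag b * Q c b p * X $ b)
      - mdiag c * mdiag d * X$d * Y c"
    unfolding contr_def Y_def
    by (simp add: right_diff_distrib distrib_left distrib_right left_diff_distrib
      sum.distrib sum_subtractf mif1 mif2 sum_if_out sum.delta sum.delta' sum_distrib_left mult_ac)
  also have "\<dots> = 2 * (mdiag c * mdiag d * (X$c * Y d - X$d * Y c))"
    unfolding Y' by (simp add: algebra_simps)
  finally have h1: "contr (AZ (Om c d) Q) p X X = 2 * (mdiag c * mdiag d * (X$c * Y d - X$d * Y c))" .
  have h2: "contr Q p X ((mdiag c * X$c) *\<^sub>R axis d 1 - (mdiag d * X$d) *\<^sub>R axis c 1)
      = mdiag c * mdiag d * (X$c * Y d - X$d * Y c)"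
    unfolding contr_diff_right contr_scale_right
    by (simp add: contr_def Y_def axis_def mif1 mif2 sum.delta sum.delta' sum_distrib_left sum_distrib_right
        algebra_simps cong: if_cong)
  show ?thesis using h1 h2 by simp
qed


lemma tri3: fixes a b c :: real shows "\<bar>a + b + c\<bar> \<le> \<bar>a\<bar> + \<bar>b\<bar> + \<bar>c\<bar>"
  using abs_triangle_ineq[of "a+b" c] abs_triangle_ineq[of a b] by linarith

lemma normLT_nonneg: "0 \<le> normLT S1 S2 Q p" unfolding normLT_def by simp

lemma normLL_AZ:
  assumes fr: "sframe S1 S2" and sym: "\<And>a b. Q a b p = Q b a p"
  shows "normLL (AZ Z Q) p \<le> 40 * normLT S1 S2 Q p"
proof (cases Z)
  case (Om c d)
  define L where "L = Lvec p"
  define V :: pt where "V = (mdiag c * L$c) *\<^sub>R axis d 1 - (mdiag d * L$d) *\<^sub>R axis c 1"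
  have Vn: "V $ b = (if b = d then mdiag c * L$c else 0) - (if b = c then mdiag d * L$d else 0)" for b
    unfolding V_def by (simp add: axis_def)
  have Lb: "\<bar>L $ b\<bar> \<le> 1" for b unfolding L_def by (rule bounds1)
  have Vb: "\<bar>V $ b\<bar> \<le> 2" for b
  proof -
    have "\<bar>mdiag c * L$c\<bar> \<le> 1" "\<bar>mdiag d * L$d\<bar> \<le> 1" using Lb by (simp_all add: abs_mult mdiag_abs)
    then show ?thesis unfolding Vn by (auto simp: abs_le_iff)
  qed
  have mVL: "(\<Sum>b\<in>UNIV. mdiag b * V $ b * L $ b) = 0"
    unfolding Vn by (simp add: left_diff_distrib right_diff_distrib mif1 mif2 sum_subtractf sum.delta sum.delta' mult_ac)
  have L0: "L $ 0 = 1" unfolding L_def by (simp add: Lvec_nth)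
  have iVL: "inner V L = 2 * V $ 0"
    using mVL L0 unfolding inner4 by (simp add: sum_UNIV4 mdiag_def)
  have iLL: "inner L L = 2"
    using omega_sq[of p] unfolding inner4 L_def by (simp add: Lvec_nth power2_eq_square)
  define s where "s = V - (V $ 0) *\<^sub>R L"
  have s0: "s $ 0 = 0" unfolding s_def using L0 by simp
  have sL: "inner s (Lvec p) = 0" unfolding s_def L_def[symmetric]
    by (simp add: inner_diff_left iVL iLL)
  have sdec: "s = inner s (S1 p) *\<^sub>R S1 p + inner s (S2 p) *\<^sub>R S2 p" by (rule frame_complete[OF fr s0 sL])
  have ns: "norm s \<le> 16"
  proof -
    have "\<bar>s $ b\<bar> \<le> 4" for b
    proof -
      have "\<bar>s $ b\<bar> \<le> \<bar>V $ b\<bar> + \<bar>V $ 0\<bar> * \<bar>L $ b\<bar>" unfolding s_def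
        using abs_triangle_ineq4[of "V $ b" "V $ 0 * L $ b"] by (simp add: abs_mult)
      also have "\<dots> \<le> 2 + 2 * 1" using Vb[of b] Vb[of 0] Lb[of b] by (intro add_mono mult_mono) auto
      finally show ?thesis by simp
    qed
    then have "(\<Sum>b\<in>UNIV. \<bar>s $ b\<bar>) \<le> (\<Sum>b::4\<in>UNIV. 4)" by (intro sum_mono) auto
    then show ?thesis using norm_le_l1_cart[of s] by simp
  qed
  have nS: "norm (S1 p) = 1" "norm (S2 p) = 1" using fr unfolding sframe_def by auto
  have al: "\<bar>inner s (S1 p)\<bar> \<le> 16" "\<bar>inner s (S2 p)\<bar> \<le> 16"
    using Cauchy_Schwarz_ineq2[of s "S1 p"] Cauchy_Schwarz_ineq2[of s "S2 p"] ns nS by auto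
  have "V = (V $ 0) *\<^sub>R L + s" unfolding s_def by simp
  then have cV: "contr Q p L V = V $ 0 * contr Q p L L + inner s (S1 p) * contr Q p L (S1 p) + inner s (S2 p) * contr Q p L (S2 p)"
  proof -
    have "V = (V $ 0) *\<^sub>R L + (inner s (S1 p) *\<^sub>R S1 p + inner s (S2 p) *\<^sub>R S2 p)"
      using \<open>V = (V $ 0) *\<^sub>R L + s\<close> sdec by simp
    then have "contr Q p L V = contr Q p L ((V $ 0) *\<^sub>R L + (inner s (S1 p) *\<^sub>R S1 p + inner s (S2 p) *\<^sub>R S2 p))"
      by (rule arg_cong)
    then show ?thesis by (simp only: contr_add_right contr_scale_right add.assoc)
  qed
  have "\<bar>contr Q p L V\<bar> \<le> 2 * \<bar>contr Q p L L\<bar> + 16 * \<bar>contr Q p L (S1 p)\<bar> + 16 * \<bar>contr Q p L (S2 p)\<bar>"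
  proof -
    have "\<bar>contr Q p L V\<bar> \<le> \<bar>V $ 0\<bar> * \<bar>contr Q p L L\<bar> + \<bar>inner s (S1 p)\<bar> * \<bar>contr Q p L (S1 p)\<bar>
        + \<bar>inner s (S2 p)\<bar> * \<bar>contr Q p L (S2 p)\<bar>"
      unfolding cV abs_mult[symmetric] by (rule tri3)
    also have "\<dots> \<le> 2 * \<bar>contr Q p L L\<bar> + 16 * \<bar>contr Q p L (S1 p)\<bar> + 16 * \<bar>contr Q p L (S2 p)\<bar>"
      using Vb[of 0] al by (intro add_mono mult_right_mono) auto
    finally show ?thesis .
  qed
  moreover have "0 \<le> \<bar>contr Q p L L\<bar>" by simp
  ultimately have "\<bar>contr Q p L V\<bar> \<le> 16 * normLT S1 S2 Q p" unfolding normLT_def L_def[symmetric] by argo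
  then show ?thesis unfolding normLL_def Om L_def[symmetric]
    using contr_AZ_Om[where Q=Q and p=p and c=c and d=d and X=L, OF sym] V_def by (simp add: abs_mult)
qed (auto simp: normLL_def contr_def normLT_nonneg)


lemma finite_MI: "finite (MI n)"
  unfolding MI_def by (rule finite_lists_length_le[OF finite_Zset])

lemma gradnorm_nonneg: "0 \<le> gradnorm f p" unfolding gradnorm_def by (simp add: sum_nonneg)
lemma normLL_nonneg: "0 \<le> normLL P p" unfolding normLL_def by simp

definition R1 :: "nat \<Rightarrow> (4 \<Rightarrow> 4 \<Rightarrow> pt \<Rightarrow> real) \<Rightarrow> (pt \<Rightarrow> real) \<Rightarrow> pt \<Rightarrow> real" where
  "R1 n H \<phi> p = 1 / (1 + tcoord p + \<bar>qcoord p\<bar>) *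
          (\<Sum>K\<in>MI n. \<Sum>J\<in>{J\<in>MI n. length J + (length K - 1) \<le> n}.
              tnorm (ZH J H) p * gradnorm (ZI K \<phi>) p)"

definition R2 :: "(pt \<Rightarrow> pt) \<Rightarrow> (pt \<Rightarrow> pt) \<Rightarrow> nat \<Rightarrow> (4 \<Rightarrow> 4 \<Rightarrow> pt \<Rightarrow> real) \<Rightarrow> (pt \<Rightarrow> real) \<Rightarrow> pt \<Rightarrow> real" where
  "R2 S1 S2 n H \<phi> p = 1 / (1 + \<bar>qcoord p\<bar>) *
          (\<Sum>K\<in>MI n.
             ((\<Sum>J\<in>{J\<in>MI n. length J + (length K - 1) \<le> n}. normLL (ZH J H) p)
            + (\<Sum>J\<in>{J\<in>MI n. length J + (length K - 1) + 1 \<le> n}. normLT S1 S2 (ZH J H) p)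
            + (\<Sum>J\<in>{J\<in>MI n. length J + (length K - 1) + 2 \<le> n}. tnorm (ZH J H) p))
            * gradnorm (ZI K \<phi>) p)"

lemma R2_inner_nonneg: "0 \<le> (\<Sum>J\<in>A. normLL (ZH J H) p) + (\<Sum>J\<in>B. normLT S1 S2 (ZH J H) p) + (\<Sum>J\<in>C. tnorm (ZH J H) p)"
  by (intro add_nonneg_nonneg sum_nonneg normLL_nonneg normLT_nonneg tnorm_nonneg)

lemma single1:
  assumes t0: "tcoord p \<ge> 0" and J: "J \<in> MI n" and K: "K \<in> MI n" and c: "length J + (length K - 1) \<le> n"
  shows "tnorm (ZH J H) p * gradnorm (ZI K \<phi>) p / (1 + tcoord p + \<bar>qcoord p\<bar>) \<le> R1 n H \<phi> p"
proof -
  have W: "0 < 1 + tcoord p + \<bar>qcoord p\<bar>" using t0 by simp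
  have "tnorm (ZH J H) p * gradnorm (ZI K \<phi>) p \<le> (\<Sum>J\<in>{J\<in>MI n. length J + (length K - 1) \<le> n}. tnorm (ZH J H) p * gradnorm (ZI K \<phi>) p)"
    by (rule member_le_sum) (use J c finite_MI in \<open>auto intro: mult_nonneg_nonneg tnorm_nonneg gradnorm_nonneg\<close>)
  also have "\<dots> \<le> (\<Sum>K\<in>MI n. \<Sum>J\<in>{J\<in>MI n. length J + (length K - 1) \<le> n}. tnorm (ZH J H) p * gradnorm (ZI K \<phi>) p)"
    by (rule member_le_sum[where f="\<lambda>K. \<Sum>J\<in>{J\<in>MI n. length J + (length K - 1) \<le> n}. tnorm (ZH J H) p * gradnorm (ZI K \<phi>) p"])
       (use K finite_MI in \<open>auto intro!: sum_nonneg mult_nonneg_nonneg tnorm_nonneg gradnorm_nonneg\<close>)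
  finally show ?thesis unfolding R1_def using W by (simp add: divide_right_mono)
qed

lemma single2_gen:
  assumes t0: "tcoord p \<ge> 0" and K: "K \<in> MI n"
    and x: "x \<le> (\<Sum>J\<in>{J\<in>MI n. length J + (length K - 1) \<le> n}. normLL (ZH J H) p)
            + (\<Sum>J\<in>{J\<in>MI n. length J + (length K - 1) + 1 \<le> n}. normLT S1 S2 (ZH J H) p)
            + (\<Sum>J\<in>{J\<in>MI n. length J + (length K - 1) + 2 \<le> n}. tnorm (ZH J H) p)"
  shows "x * gradnorm (ZI K \<phi>) p / (1 + \<bar>qcoord p\<bar>) \<le> R2 S1 S2 n H \<phi> p"
proof -
  have W: "0 < 1 + \<bar>qcoord p\<bar>" by simp
  have "x * gradnorm (ZI K \<phi>) p \<le> ((\<Sum>J\<in>{J\<in>MI n. length J + (length K - 1) \<le> n}. normLL (ZH J H) p)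
            + (\<Sum>J\<in>{J\<in>MI n. length J + (length K - 1) + 1 \<le> n}. normLT S1 S2 (ZH J H) p)
            + (\<Sum>J\<in>{J\<in>MI n. length J + (length K - 1) + 2 \<le> n}. tnorm (ZH J H) p)) * gradnorm (ZI K \<phi>) p"
    using x gradnorm_nonneg by (rule mult_right_mono)
  also have "\<dots> \<le> (\<Sum>K\<in>MI n.
             ((\<Sum>J\<in>{J\<in>MI n. length J + (length K - 1) \<le> n}. normLL (ZH J H) p)
            + (\<Sum>J\<in>{J\<in>MI n. length J + (length K - 1) + 1 \<le> n}. normLT S1 S2 (ZH J H) p)
            + (\<Sum>J\<in>{J\<in>MI n. length J + (length K - 1) + 2 \<le> n}. tnorm (ZH J H) p))
            * gradnorm (ZI K \<phi>) p)"
    by (rule member_le_sum[where f="\<lambda>K. ((\<Sum>J\<in>{J\<in>MI n. length J + (length K - 1) \<le> n}. normLL (ZH J H) p)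
            + (\<Sum>J\<in>{J\<in>MI n. length J + (length K - 1) + 1 \<le> n}. normLT S1 S2 (ZH J H) p)
            + (\<Sum>J\<in>{J\<in>MI n. length J + (length K - 1) + 2 \<le> n}. tnorm (ZH J H) p))
            * gradnorm (ZI K \<phi>) p"])
       (use K finite_MI in \<open>auto intro!: mult_nonneg_nonneg R2_inner_nonneg gradnorm_nonneg\<close>)
  finally show ?thesis unfolding R2_def using W by (simp add: divide_right_mono)
qed

lemma sum3_nonneg_le1: "finite A \<Longrightarrow> J \<in> A \<Longrightarrow> normLL (ZH J H) p \<le>
   (\<Sum>J\<in>A. normLL (ZH J H) p) + (\<Sum>J\<in>B. normLT S1 S2 (ZH J H) p) + (\<Sum>J\<in>C. tnorm (ZH J H) p)"
proof -
  assume "finite A" "J \<in> A"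
  then have "normLL (ZH J H) p \<le> (\<Sum>J\<in>A. normLL (ZH J H) p)" by (intro member_le_sum normLL_nonneg)
  moreover have "0 \<le> (\<Sum>J\<in>B. normLT S1 S2 (ZH J H) p)" "0 \<le> (\<Sum>J\<in>C. tnorm (ZH J H) p)"
    by (intro sum_nonneg normLT_nonneg tnorm_nonneg)+
  ultimately show ?thesis by linarith
qed

lemma sum3_nonneg_le2: "finite B \<Longrightarrow> J \<in> B \<Longrightarrow> normLT S1 S2 (ZH J H) p \<le>
   (\<Sum>J\<in>A. normLL (ZH J H) p) + (\<Sum>J\<in>B. normLT S1 S2 (ZH J H) p) + (\<Sum>J\<in>C. tnorm (ZH J H) p)"
proof -
  assume "finite B" "J \<in> B"
  then have "normLT S1 S2 (ZH J H) p \<le> (\<Sum>J\<in>B. normLT S1 S2 (ZH J H) p)" by (intro member_le_sum normLT_nonneg)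
  moreover have "0 \<le> (\<Sum>J\<in>A. normLL (ZH J H) p)" "0 \<le> (\<Sum>J\<in>C. tnorm (ZH J H) p)"
    by (intro sum_nonneg normLL_nonneg tnorm_nonneg)+
  ultimately show ?thesis by linarith
qed

lemma sum3_nonneg_le3: "finite C \<Longrightarrow> J \<in> C \<Longrightarrow> tnorm (ZH J H) p \<le>
   (\<Sum>J\<in>A. normLL (ZH J H) p) + (\<Sum>J\<in>B. normLT S1 S2 (ZH J H) p) + (\<Sum>J\<in>C. tnorm (ZH J H) p)"
proof -
  assume "finite C" "J \<in> C"
  then have "tnorm (ZH J H) p \<le> (\<Sum>J\<in>C. tnorm (ZH J H) p)" by (intro member_le_sum tnorm_nonneg)
  moreover have "0 \<le> (\<Sum>J\<in>A. normLL (ZH J H) p)" "0 \<le> (\<Sum>J\<in>B. normLT S1 S2 (ZH J H) p)"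
    by (intro sum_nonneg normLL_nonneg normLT_nonneg)+
  ultimately show ?thesis by linarith
qed


lemma le_mult_self: fixes x c :: real shows "0 \<le> x \<Longrightarrow> 1 \<le> c \<Longrightarrow> x \<le> c * x"
  using mult_right_mono[of 1 c x] by simp

lemma scale_helper: fixes a b c g W :: real
  assumes "a \<le> c * b" "0 \<le> g" "0 < W" shows "a * g / W \<le> c * (b * g / W)"
proof -
  have "a * g \<le> (c * b) * g" using assms by (intro mult_right_mono)
  then have "a * g / W \<le> (c * b) * g / W" using assms by (intro divide_right_mono) auto
  then show ?thesis by simp
qed

lemma R1_nonneg: "tcoord p \<ge> 0 \<Longrightarrow> 0 \<le> R1 n H \<phi> p"
  unfolding R1_def by (intro mult_nonneg_nonneg sum_nonneg tnorm_nonneg gradnorm_nonneg) auto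

lemma R2_nonneg: "0 \<le> R2 S1 S2 n H \<phi> p"
  unfolding R2_def by (intro mult_nonneg_nonneg sum_nonneg R2_inner_nonneg gradnorm_nonneg) auto

lemma ZH_sym: "(\<And>a b. H a b = H b a) \<Longrightarrow> ZH J H a b p = ZH J H b a p"
  by (simp add: ZH_def)

locale tctx =
  fixes S1 S2 :: "pt \<Rightarrow> pt" and H :: "4 \<Rightarrow> 4 \<Rightarrow> pt \<Rightarrow> real" and \<phi> :: "pt \<Rightarrow> real" and p :: pt
    and n :: nat and As J K :: "zf list"
  assumes fr: "sframe S1 S2" and sH: "\<And>a b. smooth (H a b)" and symH: "\<And>a b. H a b = H b a"
    and s\<phi>: "smooth \<phi>" and t0: "tcoord p \<ge> 0"
    and len: "length As + length J + length K = n" and ne: "As \<noteq> [] \<or> J \<noteq> []"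
    and setJ: "set J \<subseteq> Zset" and setK: "set K \<subseteq> Zset"
begin

lemma JMI: "J \<in> MI n" using setJ len unfolding MI_def by auto

lemma Tterm:
  assumes K': "K' \<in> MI n" "length K' \<le> length K + 1"
  shows "tnorm (Acomp As (ZH J H)) p * gradnorm (ZI K' \<phi>) p / (1 + tcoord p + \<bar>qcoord p\<bar>) \<le> 4 ^ n * R1 n H \<phi> p"
proof -
  have W: "0 < 1 + tcoord p + \<bar>qcoord p\<bar>" using t0 by simp
  have "tnorm (Acomp As (ZH J H)) p \<le> 4 ^ length As * tnorm (ZH J H) p" by (rule tnorm_Acomp)
  also have "\<dots> \<le> 4 ^ n * tnorm (ZH J H) p"
    using len by (intro mult_right_mono tnorm_nonneg power_increasing) auto
  finally have a: "tnorm (Acomp As (ZH J H)) p \<le> 4 ^ n * tnorm (ZH J H) p" .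
  have "tnorm (Acomp As (ZH J H)) p * gradnorm (ZI K' \<phi>) p / (1 + tcoord p + \<bar>qcoord p\<bar>)
     \<le> 4 ^ n * (tnorm (ZH J H) p * gradnorm (ZI K' \<phi>) p / (1 + tcoord p + \<bar>qcoord p\<bar>))"
    using a W gradnorm_nonneg by (intro scale_helper)
  also have "\<dots> \<le> 4 ^ n * R1 n H \<phi> p"
    using single1[OF t0 JMI K'(1)] K'(2) len by (intro mult_left_mono) auto
  finally show ?thesis .
qed

lemma LLterm:
  assumes K': "K' \<in> MI n" "length K' \<le> length K + 1"
  shows "normLL (Acomp As (ZH J H)) p * gradnorm (ZI K' \<phi>) p / (1 + \<bar>qcoord p\<bar>) \<le> 40 * 4 ^ n * R2 S1 S2 n H \<phi> p"
proof -
  have W: "0 < 1 + \<bar>qcoord p\<bar>" by simp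
  have R: "0 \<le> R2 S1 S2 n H \<phi> p" by (rule R2_nonneg)
  have g: "0 \<le> gradnorm (ZI K' \<phi>) p" by (rule gradnorm_nonneg)
  have p4: "(1::real) \<le> 4 ^ n" by simp
  obtain X where X: "normLL (Acomp As (ZH J H)) p \<le> 40 * 4 ^ n * X"
    and XR: "X * gradnorm (ZI K' \<phi>) p / (1 + \<bar>qcoord p\<bar>) \<le> R2 S1 S2 n H \<phi> p"
  proof (cases As)
    case Nil
    have c: "length J + (length K' - 1) \<le> n" using len K'(2) Nil by auto
    have "normLL (ZH J H) p * gradnorm (ZI K' \<phi>) p / (1 + \<bar>qcoord p\<bar>) \<le> R2 S1 S2 n H \<phi> p"
      by (rule single2_gen[OF t0 K'(1)], rule sum3_nonneg_le1) (use finite_MI JMI c in auto)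
    moreover have "normLL (Acomp As (ZH J H)) p \<le> 40 * 4 ^ n * normLL (ZH J H) p"
      using Nil le_mult_self[OF normLL_nonneg[of "ZH J H" p], of "40 * 4 ^ n"] p4 by simp
    ultimately show ?thesis using that by blast
  next
    case (Cons Z As')
    show ?thesis
    proof (cases As')
      case Nil
      have c: "length J + (length K' - 1) + 1 \<le> n" using len K'(2) Nil Cons by auto
      have "normLT S1 S2 (ZH J H) p * gradnorm (ZI K' \<phi>) p / (1 + \<bar>qcoord p\<bar>) \<le> R2 S1 S2 n H \<phi> p"
        by (rule single2_gen[OF t0 K'(1)], rule sum3_nonneg_le2) (use finite_MI JMI c in auto)
      moreover have "normLL (Acomp As (ZH J H)) p \<le> 40 * 4 ^ n * normLT S1 S2 (ZH J H) p"
      proof -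
        have "normLL (Acomp As (ZH J H)) p \<le> 40 * normLT S1 S2 (ZH J H) p"
          using Cons Nil normLL_AZ[OF fr, of "ZH J H" p Z] ZH_sym[OF symH] by simp
        also have "\<dots> \<le> 40 * 4 ^ n * normLT S1 S2 (ZH J H) p"
          using le_mult_self[OF normLT_nonneg[of S1 S2 "ZH J H" p], of "4 ^ n"] p4 by (simp add: mult.assoc)
        finally show ?thesis .
      qed
      ultimately show ?thesis using that by blast
    next
      case (Cons Z' As'')
      have c: "length J + (length K' - 1) + 2 \<le> n" using len K'(2) Cons \<open>As = Z # As'\<close> by auto
      have "tnorm (ZH J H) p * gradnorm (ZI K' \<phi>) p / (1 + \<bar>qcoord p\<bar>) \<le> R2 S1 S2 n H \<phi> p"
        by (rule single2_gen[OF t0 K'(1)], rule sum3_nonneg_le3) (use finite_MI JMI c in auto)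
      moreover have "normLL (Acomp As (ZH J H)) p \<le> 40 * 4 ^ n * tnorm (ZH J H) p"
      proof -
        have "normLL (Acomp As (ZH J H)) p \<le> tnorm (Acomp As (ZH J H)) p" by (rule normLL_le)
        also have "\<dots> \<le> 4 ^ length As * tnorm (ZH J H) p" by (rule tnorm_Acomp)
        also have "\<dots> \<le> 4 ^ n * tnorm (ZH J H) p"
          using len by (intro mult_right_mono tnorm_nonneg power_increasing) auto
        also have "\<dots> \<le> 40 * 4 ^ n * tnorm (ZH J H) p"
          using tnorm_nonneg[of "ZH J H" p] by (simp add: mult_right_mono)
        finally show ?thesis .
      qed
      ultimately show ?thesis using that by blast
    qed
  qed
  have "normLL (Acomp As (ZH J H)) p * gradnorm (ZI K' \<phi>) p / (1 + \<bar>qcoord p\<bar>)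
     \<le> 40 * 4 ^ n * (X * gradnorm (ZI K' \<phi>) p / (1 + \<bar>qcoord p\<bar>))"
    using X W g by (intro scale_helper)
  also have "\<dots> \<le> 40 * 4 ^ n * R2 S1 S2 n H \<phi> p" using XR by (intro mult_left_mono) auto
  finally show ?thesis .
qed


lemma term_bound:
  "\<bar>trm H \<phi> (As, J, K) p\<bar> \<le> (1 + 8 * real (card Zset)) * (1 + real (card Zset))
      * (66 * 4 ^ n * R1 n H \<phi> p + 1600 * 4 ^ n * R2 S1 S2 n H \<phi> p)"
proof -
  define Q where "Q = Acomp As (ZH J H)"
  define \<psi> where "\<psi> = ZI K \<phi>"
  define W1 where "W1 = 1 + tcoord p + \<bar>qcoord p\<bar>"
  define W2 where "W2 = 1 + \<bar>qcoord p\<bar>"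
  define Fc where "Fc = 66 * tnorm Q p / W1 + 40 * normLL Q p / W2"
  define B where "B = 66 * 4 ^ n * R1 n H \<phi> p + 1600 * 4 ^ n * R2 S1 S2 n H \<phi> p"
  define KZ where "KZ = 1 + 8 * real (card Zset)"
  have s\<psi>: "smooth \<psi>" unfolding \<psi>_def by (rule smooth_ZI[OF s\<phi>])
  have W1p: "0 < W1" unfolding W1_def using t0 by simp
  have W2p: "0 < W2" unfolding W2_def by simp
  have Fc0: "0 \<le> Fc" unfolding Fc_def using W1p W2p tnorm_nonneg normLL_nonneg by simp
  have FB: "Fc * gradnorm (ZI K' \<phi>) p \<le> B" if K': "K' \<in> MI n" "length K' \<le> length K + 1" for K'
  proof -
    have "Fc * gradnorm (ZI K' \<phi>) p = 66 * (tnorm Q p * gradnorm (ZI K' \<phi>) p / W1) + 40 * (normLL Q p * gradnorm (ZI K' \<phi>) p / W2)"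
      unfolding Fc_def by (simp add: algebra_simps)
    also have "\<dots> \<le> 66 * (4 ^ n * R1 n H \<phi> p) + 40 * (40 * 4 ^ n * R2 S1 S2 n H \<phi> p)"
      using Tterm[OF K'] LLterm[OF K'] unfolding Q_def W1_def W2_def by (intro add_mono mult_left_mono) auto
    finally show ?thesis unfolding B_def by simp
  qed
  have KMI: "K \<in> MI n" using setK len unfolding MI_def by auto
  have ZKMI: "Z # K \<in> MI n" if "Z \<in> Zset" for Z
  proof -
    have "length As + length J \<ge> 1" using ne by (cases As; cases J) auto
    then show ?thesis using that setK len unfolding MI_def by auto
  qed
  have GZe: "GZ \<psi> p = gradnorm (ZI K \<phi>) p + (\<Sum>Z\<in>Zset. gradnorm (ZI (Z # K) \<phi>) p)"
    unfolding GZ_def \<psi>_def by (simp add: ZI_Cons)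
  have "Fc * GZ \<psi> p = Fc * gradnorm (ZI K \<phi>) p + (\<Sum>Z\<in>Zset. Fc * gradnorm (ZI (Z # K) \<phi>) p)"
    unfolding GZe by (simp add: distrib_left sum_distrib_left)
  also have "\<dots> \<le> B + (\<Sum>Z\<in>Zset. B)"
    by (intro add_mono sum_mono FB KMI ZKMI) auto
  also have "\<dots> = (1 + real (card Zset)) * B" by (simp add: algebra_simps)
  finally have FG: "Fc * GZ \<psi> p \<le> (1 + real (card Zset)) * B" .
  have "\<bar>trm H \<phi> (As, J, K) p\<bar> = \<bar>Dop Q \<psi> p\<bar>" unfolding trm_def Q_def \<psi>_def by simp
  also have "\<dots> \<le> Fc * (\<Sum>c\<in>UNIV. Zs (pd c \<psi>) p)"
    unfolding Fc_def W1_def W2_def by (rule Dop_bound[OF s\<psi> t0])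
  also have "\<dots> \<le> Fc * (KZ * GZ \<psi> p)"
    unfolding KZ_def by (intro mult_left_mono SM_bound s\<psi> Fc0)
  also have "\<dots> = KZ * (Fc * GZ \<psi> p)" by simp
  also have "\<dots> \<le> KZ * ((1 + real (card Zset)) * B)"
    unfolding KZ_def by (intro mult_left_mono FG) auto
  finally show ?thesis unfolding KZ_def B_def by (simp add: mult.assoc)
qed

end

theorem proposition5p3:
  fixes S1 S2 :: "pt \<Rightarrow> pt" and I :: "zf list"
  assumes "sframe S1 S2" and "set I \<subseteq> Zset"
  shows "\<exists>C. \<forall>(H :: 4 \<Rightarrow> 4 \<Rightarrow> pt \<Rightarrow> real) (\<phi> :: pt \<Rightarrow> real) p.
    (\<forall>a b. smooth (H a b) \<and> H a b = H b a) \<longrightarrow> smooth \<phi> \<longrightarrow> tcoord p \<ge> 0 \<longrightarrow>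
    \<bar>boxt H (ZI I \<phi>) p - hatZI I (boxt H \<phi>) p\<bar>
    \<le> C * ( 1 / (1 + tcoord p + \<bar>qcoord p\<bar>) *
          (\<Sum>K\<in>MI (length I). \<Sum>J\<in>{J\<in>MI (length I). length J + (length K - 1) \<le> length I}.
              tnorm (ZH J H) p * gradnorm (ZI K \<phi>) p)
        + 1 / (1 + \<bar>qcoord p\<bar>) *
          (\<Sum>K\<in>MI (length I).
             ((\<Sum>J\<in>{J\<in>MI (length I). length J + (length K - 1) \<le> length I}. normLL (ZH J H) p)
            + (\<Sum>J\<in>{J\<in>MI (length I). length J + (length K - 1) + 1 \<le> length I}. normLT S1 S2 (ZH J H) p)
            + (\<Sum>J\<in>{J\<in>MI (length I). length J + (length K - 1) + 2 \<le> length I}. tnorm (ZH J H) p))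
            * gradnorm (ZI K \<phi>) p))"
proof -
  let ?n = "length I"
  obtain rest where r: "trip I = ([], [], I) # rest"
    and rr: "\<forall>t\<in>set rest. fst t \<noteq> [] \<or> fst (snd t) \<noteq> []"
    using trip_struct by blast
  define C0 where "C0 = (1 + 8 * real (card Zset)) * (1 + real (card Zset)) * (1666 * 4 ^ ?n)"
  have C0n: "0 \<le> C0" unfolding C0_def by simp
  show ?thesis
  proof (intro exI[of _ "real (length rest) * C0"] allI impI)
    fix H :: "4 \<Rightarrow> 4 \<Rightarrow> pt \<Rightarrow> real" and \<phi> :: "pt \<Rightarrow> real" and p :: pt
    assume hH: "\<forall>a b. smooth (H a b) \<and> H a b = H b a" and s\<phi>: "smooth \<phi>" and t0: "0 \<le> tcoord p"
    have sH: "\<And>a b. smooth (H a b)" and symH: "\<And>a b. H a b = H b a" using hH by auto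
    define R where "R = R1 ?n H \<phi> p + R2 S1 S2 ?n H \<phi> p"
    have R1n: "0 \<le> R1 ?n H \<phi> p" by (rule R1_nonneg[OF t0])
    have R2n: "0 \<le> R2 S1 S2 ?n H \<phi> p" by (rule R2_nonneg)
    have tb: "\<bar>trm H \<phi> t p\<bar> \<le> C0 * R" if t: "t \<in> set rest" for t
    proof -
      obtain As J K where tt: "t = (As, J, K)" by (cases t) auto
      have "t \<in> set (trip I)" using r t by simp
      from trip_props[OF this] have pr: "length As + length J + length K = ?n" "set As \<subseteq> set I"
        "set J \<subseteq> set I" "set K \<subseteq> set I" unfolding tt by auto
      have ne: "As \<noteq> [] \<or> J \<noteq> []" using rr t tt by auto
      interpret T: tctx S1 S2 H \<phi> p ?n As J K
        using assms pr ne sH symH s\<phi> t0 by unfold_locales auto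
      have "\<bar>trm H \<phi> t p\<bar> \<le> (1 + 8 * real (card Zset)) * (1 + real (card Zset))
        * (66 * 4 ^ ?n * R1 ?n H \<phi> p + 1600 * 4 ^ ?n * R2 S1 S2 ?n H \<phi> p)"
        unfolding tt by (rule T.term_bound)
      also have "\<dots> \<le> (1 + 8 * real (card Zset)) * (1 + real (card Zset)) * (1666 * 4 ^ ?n * R)"
        unfolding R_def using R1n R2n by (intro mult_left_mono) (auto simp: algebra_simps)
      finally show ?thesis unfolding C0_def by (simp add: mult.assoc)
    qed
    have "\<bar>boxt H (ZI I \<phi>) p - hatZI I (boxt H \<phi>) p\<bar> = \<bar>sum_list (map (\<lambda>t. trm H \<phi> t p) rest)\<bar>"
      using error_formula[OF sH s\<phi> r] by simp
    also have "\<dots> \<le> sum_list (map (\<lambda>t. \<bar>trm H \<phi> t p\<bar>) rest)"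
      using sum_list_abs[of "map (\<lambda>t. trm H \<phi> t p) rest"] by (simp add: comp_def)
    also have "\<dots> \<le> sum_list (map (\<lambda>t. C0 * R) rest)"
      by (rule sum_list_mono) (rule tb)
    also have "\<dots> = real (length rest) * C0 * R" by (simp add: sum_list_triv)
    finally show "\<bar>boxt H (ZI I \<phi>) p - hatZI I (boxt H \<phi>) p\<bar>
    \<le> real (length rest) * C0 * ( 1 / (1 + tcoord p + \<bar>qcoord p\<bar>) *
          (\<Sum>K\<in>MI (length I). \<Sum>J\<in>{J\<in>MI (length I). length J + (length K - 1) \<le> length I}.
              tnorm (ZH J H) p * gradnorm (ZI K \<phi>) p)
        + 1 / (1 + \<bar>qcoord p\<bar>) *
          (\<Sum>K\<in>MI (length I).
             ((\<Sum>J\<in>{J\<in>MI (length I). length J + (length K - 1) \<le> length I}. normLL (ZH J H) p)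
            + (\<Sum>J\<in>{J\<in>MI (length I). length J + (length K - 1) + 1 \<le> length I}. normLT S1 S2 (ZH J H) p)
            + (\<Sum>J\<in>{J\<in>MI (length I). length J + (length K - 1) + 2 \<le> length I}. tnorm (ZH J H) p))
            * gradnorm (ZI K \<phi>) p))"
      unfolding R_def R1_def R2_def .
  qed
qed


end
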